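(* Let $(a_n)_{\mathrm c}=[a_{n\varepsilon}]_{\mathrm c}=[\hat a_{n\varepsilon}]_{\mathrm c}\in\widetilde{\mathbb C}_{\mathrm c}$, $z=[z_\varepsilon]=[\hat z_\varepsilon]\in\widetilde{\mathbb C}$ and $c=[c_\varepsilon]=[\hat c_\varepsilon]\in\widetilde{\mathbb C}$, and assume $z\in S((a_n)_{\mathrm c},c)$. Then: (i) the representatives $(a_{n\varepsilon})_{n,\varepsilon}$, $(z_\varepsilon)$, $(c_\varepsilon)$ (and likewise any other choice of representatives) satisfy all the conditions (a), (b), (c) in the definition of the set of convergence; (ii) $[a_{n\varepsilon}(z_\varepsilon-c_\varepsilon)^n]_{\mathrm s}=[\hat a_{n\varepsilon}(\hat z_\varepsilon-\hat c_\varepsilon)^n]_{\mathrm s}$ in $\widetilde{\mathbb C}_{\mathrm s}$.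
   Context: Fix $I=(0,1]$ and a gauge $\rho=(\rho_\varepsilon)_{\varepsilon\in I}$ with $\rho_\varepsilon\in I$ and $\rho_\varepsilon\to0$ as $\varepsilon\to0$. "$\forall^0\varepsilon$" means "for all sufficiently small $\varepsilon\in I$". A net $(x_\varepsilon)\in\mathbb C^I$ is $\rho$-moderate ($(x_\varepsilon)\in\mathbb C_\rho$) if $\exists N\in\mathbb N\,\forall^0\varepsilon:|x_\varepsilon|\le\rho_\varepsilon^{-N}$, and $\rho$-negligible if $\forall q\in\mathbb N\,\forall^0\varepsilon:|x_\varepsilon|\le\rho_\varepsilon^q$. $\widetilde{\mathbb C}:=\mathbb C_\rho/\{\text{negligible nets}\}$ with classes $[x_\varepsilon]$; $\widetilde{\mathbb R}\subseteq\widetilde{\mathbb C}$ consists of classes of real moderate nets; $\mathrm d\rho:=[\rho_\varepsilon]$, $|[z_\varepsilon]|:=[|z_\varepsilon|]$. On $\widetilde{\mathbb R}$: $[x_\varepsilon]\le[y_\varepsilon]$ iff $x_\varepsilon\le y_\varepsilon+z_\varepsilon$ $\forall^0\varepsilon$ for some negligible $(z_\varepsilon)$; $x<y$ iff $\exists m\,\forall^0\varepsilon:y_\varepsilon-x_\varepsilon>\rho_\varepsilon^m$. Hypernatural numbers: $\widetilde{\mathbb N}:=\{[n_\varepsilon]\in\widetilde{\mathbb R}:n_\varepsilon\in\mathbb N\ \forall\varepsilon\}$; for each $N\in\widetilde{\mathbb N}$ a representative $(\mathrm{ni}(N)_\varepsilon)$ with all $\mathrm{ni}(N)_\varepsilon\in\mathbb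 N$ is fixed. Hyperlimit: $l=\lim_{n\in\widetilde{\mathbb N}}a_n$ means $\forall q\,\exists M\in\widetilde{\mathbb N}\,\forall n\in\widetilde{\mathbb N}:n\ge M\Rightarrow|a_n-l|<\mathrm d\rho^q$. Hyperseries: a net $(a_{n\varepsilon})_{n\in\mathbb N,\varepsilon\in I}$ is moderate over hypersums if for every $N\in\widetilde{\mathbb N}$ the net $(\sum_{n=0}^{\mathrm{ni}(N)_\varepsilon}a_{n\varepsilon})_\varepsilon$ is $\rho$-moderate; two such nets are equivalent if for all $N,M\in\widetilde{\mathbb N}$ the net $(\sum_{n=\mathrm{ni}(N)_\varepsilon}^{\mathrm{ni}(M)_\varepsilon}(a_{n\varepsilon}-\bar a_{n\varepsilon}))_\varepsilon$ is negligible; the quotient is $\widetilde{\mathbb C}_{\mathrm s}$ with classes $[a_{n\varepsilon}]_{\mathrm s}$. $\sum_{n=N}^Ma_n:=[\sum_{n=\mathrm{ni}(N)_\varepsilon}^{\mathrm{ni}(M)_\varepsilon}a_{n\varepsilon}]$, and $\sum_{n\in\widetilde{\mathbb N}}a_n:=\lim_{N\in\widetilde{\mathbb N}}\sum_{n=0}^Na_n$ when this hyperlimit exists (convergence). Coefficients: $\widetilde{\mathbb C}_{\mathrm c}$ is the set of weakly $\rho$-moderate nets $(a_{n\varepsilon})$ ($\exists Q,R\in\mathbb N\,\forall^0\varepsilon\,\forall n\in\mathbb N:|a_{n\varepsilon}|\le\rho_\varepsilon^{-nQ-R}$) modulo strong equivalence ($\forall q,r\,\forall^0\varepsilon\,\forall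 n:|a_{n\varepsilon}-\bar a_{n\varepsilon}|\le\rho_\varepsilon^{nq+r}$), classes $(a_n)_{\mathrm c}=[a_{n\varepsilon}]_{\mathrm c}$. $\widetilde{\mathbb R}_\infty:=(\mathbb R\cup\{\pm\infty\})^I/\sim_\rho$ (same negligibility relation), ordered by $x\le y$ iff some representatives satisfy $x_\varepsilon\le y_\varepsilon$ $\forall^0\varepsilon$, and for $x\in\widetilde{\mathbb R}$, $x<y$ iff $\exists m\,\forall^0\varepsilon:y_\varepsilon>x_\varepsilon+\rho_\varepsilon^m$. Radius: $\mathrm{rad}(a_n)_{\mathrm c}:=[(\limsup_n|a_{n\varepsilon}|^{1/n})^{-1}]\in\widetilde{\mathbb R}_\infty$. Set of convergence: $S((a_n)_{\mathrm c},c)$ is the set of $z\in\widetilde{\mathbb C}$ with $|z-c|<\mathrm{rad}(a_n)_{\mathrm c}$ for which there exist representatives $z=[z_\varepsilon]$, $c=[c_\varepsilon]$, $(a_n)_{\mathrm c}=[a_{n\varepsilon}]_{\mathrm c}$ such that: (a) the net $(a_{n\varepsilon}(z_\varepsilon-c_\varepsilon)^n)_{n,\varepsilon}$ is moderate over hypersums (its class $(a_n(z-c)^n)_n\in\widetilde{\mathbb C}_{\mathrm s}$ is called a formal hyperpower series); (b) the hyperseries $\sum_{n\in\widetilde{\mathbb N}}a_n(z-c)^n$ converges and equals $[\sum_{n=0}^{\infty}a_{n\varepsilon}(z_\varepsilon-c_\varepsilon)^n]$ (these ordinary series converging for small $\varepsilon$ to a moderate net); (c) for every representative $z=[\hat z_\varepsilon]$,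 the net $(\sum_{n\ge1}na_{n\varepsilon}(\hat z_\varepsilon-c_\varepsilon)^{n-1})_\varepsilon$ is $\rho$-moderate. *)

theory Defs
  imports "HOL-Analysis.Analysis" "HOL-Library.Extended_Real"
begin

text \<open>Nets are functions on real (only eps in (0,1], eps -> 0+ matter);
  "for all sufficiently small eps" is  eventually _ (at_right 0).\<close>

definition rho_gauge :: "(real \<Rightarrow> real) \<Rightarrow> bool" where
  "rho_gauge \<rho> \<longleftrightarrow> (\<forall>\<epsilon>\<in>{0<..1}. 0 < \<rho> \<epsilon> \<and> \<rho> \<epsilon> \<le> 1) \<and> (\<rho> \<longlongrightarrow> 0) (at_right 0)"

definition rho_moderate :: "(real \<Rightarrow> real) \<Rightarrow> (real \<Rightarrow> 'a::real_normed_vector) \<Rightarrow> bool" where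
  "rho_moderate \<rho> x \<longleftrightarrow> (\<exists>N::nat. \<forall>\<^sub>F \<epsilon> in at_right 0. norm (x \<epsilon>) \<le> inverse (\<rho> \<epsilon> ^ N))"

definition rho_negligible :: "(real \<Rightarrow> real) \<Rightarrow> (real \<Rightarrow> 'a::real_normed_vector) \<Rightarrow> bool" where
  "rho_negligible \<rho> x \<longleftrightarrow> (\<forall>q::nat. \<forall>\<^sub>F \<epsilon> in at_right 0. norm (x \<epsilon>) \<le> \<rho> \<epsilon> ^ q)"

definition rho_eq :: "(real \<Rightarrow> real) \<Rightarrow> (real \<Rightarrow> 'a::real_normed_vector) \<Rightarrow> (real \<Rightarrow> 'a) \<Rightarrow> bool" where
  "rho_eq \<rho> x y \<longleftrightarrow> rho_negligible \<rho> (\<lambda>\<epsilon>. x \<epsilon> - y \<epsilon>)"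

definition rt_le :: "(real \<Rightarrow> real) \<Rightarrow> (real \<Rightarrow> real) \<Rightarrow> (real \<Rightarrow> real) \<Rightarrow> bool" where
  "rt_le \<rho> x y \<longleftrightarrow> (\<exists>z. rho_negligible \<rho> z \<and> (\<forall>\<^sub>F \<epsilon> in at_right 0. x \<epsilon> \<le> y \<epsilon> + z \<epsilon>))"

definition rt_lt :: "(real \<Rightarrow> real) \<Rightarrow> (real \<Rightarrow> real) \<Rightarrow> (real \<Rightarrow> real) \<Rightarrow> bool" where
  "rt_lt \<rho> x y \<longleftrightarrow> (\<exists>m::nat. \<forall>\<^sub>F \<epsilon> in at_right 0. y \<epsilon> - x \<epsilon> > \<rho> \<epsilon> ^ m)"

definition rt_lt_inf :: "(real \<Rightarrow> real) \<Rightarrow> (real \<Rightarrow> real) \<Rightarrow> (real \<Rightarrow> ereal) \<Rightarrow> bool" where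
  "rt_lt_inf \<rho> x y \<longleftrightarrow> (\<exists>m::nat. \<forall>\<^sub>F \<epsilon> in at_right 0. y \<epsilon> > ereal (x \<epsilon> + \<rho> \<epsilon> ^ m))"

definition hypernat :: "(real \<Rightarrow> real) \<Rightarrow> (real \<Rightarrow> nat) \<Rightarrow> bool" where
  "hypernat \<rho> N \<longleftrightarrow> rho_moderate \<rho> (\<lambda>\<epsilon>. real (N \<epsilon>))"

definition ni_choice :: "(real \<Rightarrow> real) \<Rightarrow> ((real \<Rightarrow> nat) \<Rightarrow> (real \<Rightarrow> nat)) \<Rightarrow> bool" where
  "ni_choice \<rho> ni \<longleftrightarrow>
     (\<forall>N. hypernat \<rho> N \<longrightarrow> rho_eq \<rho> (\<lambda>\<epsilon>. real (ni N \<epsilon>)) (\<lambda>\<epsilon>. real (N \<epsilon>))) \<and>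
     (\<forall>N M. hypernat \<rho> N \<longrightarrow> hypernat \<rho> M \<longrightarrow>
        rho_eq \<rho> (\<lambda>\<epsilon>. real (N \<epsilon>)) (\<lambda>\<epsilon>. real (M \<epsilon>)) \<longrightarrow> ni N = ni M)"

definition hyperlim :: "(real \<Rightarrow> real) \<Rightarrow> ((real \<Rightarrow> nat) \<Rightarrow> (real \<Rightarrow> complex)) \<Rightarrow> (real \<Rightarrow> complex) \<Rightarrow> bool" where
  "hyperlim \<rho> A l \<longleftrightarrow>
     (\<forall>q::nat. \<exists>M. hypernat \<rho> M \<and>
        (\<forall>n. hypernat \<rho> n \<longrightarrow> rt_le \<rho> (\<lambda>\<epsilon>. real (M \<epsilon>)) (\<lambda>\<epsilon>. real (n \<epsilon>)) \<longrightarrow>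
             rt_lt \<rho> (\<lambda>\<epsilon>. cmod (A n \<epsilon> - l \<epsilon>)) (\<lambda>\<epsilon>. \<rho> \<epsilon> ^ q)))"

definition hypersum :: "((real \<Rightarrow> nat) \<Rightarrow> (real \<Rightarrow> nat)) \<Rightarrow> (nat \<Rightarrow> real \<Rightarrow> complex) \<Rightarrow> (real \<Rightarrow> nat) \<Rightarrow> real \<Rightarrow> complex" where
  "hypersum ni a N = (\<lambda>\<epsilon>. \<Sum>n\<le>ni N \<epsilon>. a n \<epsilon>)"

definition moderate_over_hypersums :: "(real \<Rightarrow> real) \<Rightarrow> ((real \<Rightarrow> nat) \<Rightarrow> (real \<Rightarrow> nat)) \<Rightarrow> (nat \<Rightarrow> real \<Rightarrow> complex) \<Rightarrow> bool" where
  "moderate_over_hypersums \<rho> ni a \<longleftrightarrow> (\<forall>N. hypernat \<rho> N \<longrightarrow> rho_moderate \<rho> (hypersum ni a N))"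

text \<open>Equality in C_s of the classes of two nets moderate over hypersums.\<close>
definition hs_eq :: "(real \<Rightarrow> real) \<Rightarrow> ((real \<Rightarrow> nat) \<Rightarrow> (real \<Rightarrow> nat)) \<Rightarrow> (nat \<Rightarrow> real \<Rightarrow> complex) \<Rightarrow> (nat \<Rightarrow> real \<Rightarrow> complex) \<Rightarrow> bool" where
  "hs_eq \<rho> ni a b \<longleftrightarrow> (\<forall>N M. hypernat \<rho> N \<longrightarrow> hypernat \<rho> M \<longrightarrow>
       rho_negligible \<rho> (\<lambda>\<epsilon>. \<Sum>n\<in>{ni N \<epsilon>..ni M \<epsilon>}. a n \<epsilon> - b n \<epsilon>))"

definition weakly_moderate :: "(real \<Rightarrow> real) \<Rightarrow> (nat \<Rightarrow> real \<Rightarrow> complex) \<Rightarrow> bool" where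
  "weakly_moderate \<rho> a \<longleftrightarrow> (\<exists>Q R::nat. \<forall>\<^sub>F \<epsilon> in at_right 0. \<forall>n. cmod (a n \<epsilon>) \<le> inverse (\<rho> \<epsilon> ^ (n*Q + R)))"

definition strong_eq :: "(real \<Rightarrow> real) \<Rightarrow> (nat \<Rightarrow> real \<Rightarrow> complex) \<Rightarrow> (nat \<Rightarrow> real \<Rightarrow> complex) \<Rightarrow> bool" where
  "strong_eq \<rho> a b \<longleftrightarrow> (\<forall>q r::nat. \<forall>\<^sub>F \<epsilon> in at_right 0. \<forall>n. cmod (a n \<epsilon> - b n \<epsilon>) \<le> \<rho> \<epsilon> ^ (n*q + r))"

definition ereal_recip :: "ereal \<Rightarrow> ereal" where
  "ereal_recip L = (if L = 0 then \<infinity> else if L = \<infinity> then 0 else ereal (1 / real_of_ereal L))"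

definition rad :: "(nat \<Rightarrow> real \<Rightarrow> complex) \<Rightarrow> real \<Rightarrow> ereal" where
  "rad a = (\<lambda>\<epsilon>. ereal_recip (limsup (\<lambda>n. ereal (root n (cmod (a n \<epsilon>))))))"

definition cond_a :: "(real \<Rightarrow> real) \<Rightarrow> ((real \<Rightarrow> nat) \<Rightarrow> (real \<Rightarrow> nat)) \<Rightarrow> (nat \<Rightarrow> real \<Rightarrow> complex) \<Rightarrow> (real \<Rightarrow> complex) \<Rightarrow> (real \<Rightarrow> complex) \<Rightarrow> bool" where
  "cond_a \<rho> ni a z c \<longleftrightarrow> moderate_over_hypersums \<rho> ni (\<lambda>n \<epsilon>. a n \<epsilon> * (z \<epsilon> - c \<epsilon>) ^ n)"

definition cond_b :: "(real \<Rightarrow> real) \<Rightarrow> ((real \<Rightarrow> nat) \<Rightarrow> (real \<Rightarrow> nat)) \<Rightarrow> (nat \<Rightarrow> real \<Rightarrow> complex) \<Rightarrow> (real \<Rightarrow> complex) \<Rightarrow> (real \<Rightarrow> complex) \<Rightarrow> bool" where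
  "cond_b \<rho> ni a z c \<longleftrightarrow>
     (\<forall>\<^sub>F \<epsilon> in at_right 0. summable (\<lambda>n. a n \<epsilon> * (z \<epsilon> - c \<epsilon>) ^ n)) \<and>
     rho_moderate \<rho> (\<lambda>\<epsilon>. \<Sum>n. a n \<epsilon> * (z \<epsilon> - c \<epsilon>) ^ n) \<and>
     hyperlim \<rho> (hypersum ni (\<lambda>n \<epsilon>. a n \<epsilon> * (z \<epsilon> - c \<epsilon>) ^ n)) (\<lambda>\<epsilon>. \<Sum>n. a n \<epsilon> * (z \<epsilon> - c \<epsilon>) ^ n)"

definition cond_c :: "(real \<Rightarrow> real) \<Rightarrow> (nat \<Rightarrow> real \<Rightarrow> complex) \<Rightarrow> (real \<Rightarrow> complex) \<Rightarrow> (real \<Rightarrow> complex) \<Rightarrow> bool" where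
  "cond_c \<rho> a z c \<longleftrightarrow>
     (\<forall>zh. rho_eq \<rho> zh z \<longrightarrow>
        (\<forall>\<^sub>F \<epsilon> in at_right 0. summable (\<lambda>n. of_nat (Suc n) * a (Suc n) \<epsilon> * (zh \<epsilon> - c \<epsilon>) ^ n)) \<and>
        rho_moderate \<rho> (\<lambda>\<epsilon>. \<Sum>n. of_nat (Suc n) * a (Suc n) \<epsilon> * (zh \<epsilon> - c \<epsilon>) ^ n))"

definition conds_abc :: "(real \<Rightarrow> real) \<Rightarrow> ((real \<Rightarrow> nat) \<Rightarrow> (real \<Rightarrow> nat)) \<Rightarrow> (nat \<Rightarrow> real \<Rightarrow> complex) \<Rightarrow> (real \<Rightarrow> complex) \<Rightarrow> (real \<Rightarrow> complex) \<Rightarrow> bool" where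
  "conds_abc \<rho> ni a z c \<longleftrightarrow> cond_a \<rho> ni a z c \<and> cond_b \<rho> ni a z c \<and> cond_c \<rho> a z c"

text \<open>z in S((a_n)_c, c), expressed via representatives a, z, c of the classes.\<close>
definition in_conv_set :: "(real \<Rightarrow> real) \<Rightarrow> ((real \<Rightarrow> nat) \<Rightarrow> (real \<Rightarrow> nat)) \<Rightarrow> (nat \<Rightarrow> real \<Rightarrow> complex) \<Rightarrow> (real \<Rightarrow> complex) \<Rightarrow> (real \<Rightarrow> complex) \<Rightarrow> bool" where
  "in_conv_set \<rho> ni a z c \<longleftrightarrow>
     rt_lt_inf \<rho> (\<lambda>\<epsilon>. cmod (z \<epsilon> - c \<epsilon>)) (rad a) \<and>
     (\<exists>a' z' c'. weakly_moderate \<rho> a' \<and> strong_eq \<rho> a a' \<and>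
        rho_moderate \<rho> z' \<and> rho_eq \<rho> z z' \<and> rho_moderate \<rho> c' \<and> rho_eq \<rho> c c' \<and>
        conds_abc \<rho> ni a' z' c')"

end

theory Submission
  imports Defs
begin

lemma PW_diff:
  fixes w v :: complex
  shows "norm (w^n - v^n) \<le> real n * norm (w - v) * max (norm w) (norm v) ^ (n - 1)"
proof (cases n)
  case 0 thus ?thesis by simp
next
  case (Suc k)
  have "w^n - v^n = (w - v) * (\<Sum>i<n. v ^ (n - Suc i) * w ^ i)" by (rule power_diff_sumr2)
  hence "norm (w^n - v^n) = norm (w - v) * norm (\<Sum>i<n. v ^ (n - Suc i) * w ^ i)" by (simp add: norm_mult)
  also have "norm (\<Sum>i<n. v ^ (n - Suc i) * w ^ i) \<le> (\<Sum>i<n. max (norm w) (norm v) ^ (n - 1))"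
  proof (rule order_trans[OF norm_sum sum_mono])
    fix i assume i: "i \<in> {..<n}"
    let ?M = "max (norm w) (norm v)"
    have M0: "0 \<le> ?M" by (simp add: le_max_iff_disj)
    have "norm (v ^ (n - Suc i) * w ^ i) = norm v ^ (n - Suc i) * norm w ^ i" by (simp add: norm_mult norm_power)
    also have "norm v ^ (n - Suc i) * norm w ^ i \<le> ?M ^ (n - Suc i) * ?M ^ i" by (intro mult_mono power_mono) (use M0 in auto)
    also have "\<dots> = ?M ^ (n - 1)" using i by (simp flip: power_add)
    finally show "norm (v ^ (n - Suc i) * w ^ i) \<le> ?M ^ (n - 1)" .
  qed
  also have "(\<Sum>i<n. max (norm w) (norm v) ^ (n - 1)) = real n * max (norm w) (norm v) ^ (n - 1)" by simp
  finally show ?thesis by (simp add: mult_left_mono mult.assoc mult.left_commute)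
qed

lemma PW_A:
  fixes w v a :: complex and r :: real
  assumes r: "0 < r" "r \<le> 1/2" and n: "1 \<le> n" "real n \<le> inverse (r^P)"
    and aw: "norm (a * w^n) \<le> inverse (r^N0)" and w: "r^s \<le> norm w"
    and d: "norm (w - v) \<le> r^(q+2*P+N0+s+2)"
  shows "norm a * (real n * norm (w - v) * max (norm w) (norm v) ^ (n - 1)) \<le> r^(q+P)"
proof -
  define \<delta> where "\<delta> = norm (w - v)"
  define x where "x = norm w"
  have x0: "0 < x" using w r unfolding x_def by (metis order_less_le_trans zero_less_power)
  have d0: "0 \<le> \<delta>" by (simp add: \<delta>_def)
  have d2: "\<delta> \<le> r^(s+P)"
    using order_trans[OF d power_decreasing[of "s+P" "q+2*P+N0+s+2" r]] r unfolding \<delta>_def by auto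
  have M: "max (norm w) (norm v) \<le> x + \<delta>"
    unfolding x_def \<delta>_def using norm_triangle_ineq2[of v w] norm_minus_commute[of w v] by auto
  have "max (norm w) (norm v) ^ (n - 1) \<le> (x + \<delta>) ^ (n - 1)"
    by (rule power_mono[OF M]) (simp add: le_max_iff_disj)
  also have "(x + \<delta>) = x * (1 + \<delta> / x)" using x0 by (simp add: field_simps)
  also have "(x * (1 + \<delta> / x)) ^ (n - 1) = x ^ (n - 1) * (1 + \<delta> / x) ^ (n - 1)" by (simp add: power_mult_distrib)
  also have "(1 + \<delta> / x) ^ (n - 1) \<le> exp (\<delta> / x) ^ (n - 1)"
    by (rule power_mono) (use x0 d0 in auto)
  also have "exp (\<delta> / x) ^ (n - 1) = exp (real (n - 1) * (\<delta> / x))" by (simp only: exp_of_nat_mult)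
  also have "\<dots> \<le> exp 1"
  proof -
    have "real (n - 1) \<le> inverse (r^P)" using n by linarith
    moreover have "\<delta> / x \<le> r^(s+P) / r^s" using d2 w x0 d0 r unfolding x_def by (intro frac_le) auto
    moreover have "r^(s+P) / r^s = r^P" using r by (simp add: power_add)
    ultimately have "real (n - 1) * (\<delta> / x) \<le> inverse (r^P) * r^P"
      using x0 d0 r by (intro mult_mono) auto
    also have "\<dots> = 1" using r by simp
    finally show ?thesis by simp
  qed
  also have "exp (1::real) \<le> 3" by (rule exp_le)
  finally have Mb: "max (norm w) (norm v) ^ (n - 1) \<le> x ^ (n - 1) * 3"
    using x0 by (simp add: mult_left_mono)
  have ax: "norm a * x ^ (n - 1) \<le> inverse (r^N0) * inverse (r^s)"
  proof -
    have "norm a * x ^ (n - 1) * x = norm (a * w^n)"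
      using n by (simp add: x_def norm_mult norm_power mult.assoc flip: power_Suc2)
    also have "\<dots> \<le> inverse (r^N0)" by (rule aw)
    finally have "norm a * x ^ (n - 1) \<le> inverse (r^N0) / x" using x0 by (simp add: pos_le_divide_eq)
    also have "\<dots> \<le> inverse (r^N0) / r^s" using x0 w r unfolding x_def by (intro divide_left_mono) auto
    finally show ?thesis by (simp add: divide_inverse)
  qed
  have "norm a * (real n * \<delta> * max (norm w) (norm v) ^ (n - 1)) \<le> norm a * (real n * \<delta> * (x ^ (n - 1) * 3))"
    by (intro mult_left_mono Mb) (use d0 in auto)
  also have "\<dots> = 3 * real n * \<delta> * (norm a * x ^ (n - 1))" by simp
  also have "\<dots> \<le> 3 * inverse (r^P) * r^(q+2*P+N0+s+2) * (inverse (r^N0) * inverse (r^s))"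
  proof (rule mult_mono[OF _ ax])
    show "3 * real n * \<delta> \<le> 3 * inverse (r^P) * r^(q+2*P+N0+s+2)"
      using n d d0 r unfolding \<delta>_def by (intro mult_mono) auto
  qed (use r d0 x0 in auto)
  also have "\<dots> = 3 * r^2 * r^(q+P)"
  proof -
    have e: "q+2*P+N0+s+2 = (q+P) + 2 + P + N0 + s" by simp
    show ?thesis unfolding e power_add using r by (simp add: field_simps)
  qed
  also have "\<dots> \<le> 1 * r^(q+P)"
  proof (rule mult_right_mono)
    have "r^2 \<le> (1/2)^2" using r by (intro power_mono) auto
    thus "3 * r^2 \<le> 1" by (simp add: power_divide)
  qed (use r in auto)
  finally show ?thesis by (simp add: \<delta>_def)
qed

lemma PW_B:
  fixes w v a :: complex and r :: real
  assumes r: "0 < r" "r \<le> 1/2" and n: "1 \<le> n" "real n \<le> inverse (r^P)"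
    and a: "norm a \<le> inverse (r^(n*Q+R))" and w: "norm w < r^(Q+2)"
    and d: "norm (w - v) \<le> r^(q+2*P+R+2*Q+3)"
  shows "norm a * (real n * norm (w - v) * max (norm w) (norm v) ^ (n - 1)) \<le> r^(q+P)"
proof -
  define \<delta> where "\<delta> = norm (w - v)"
  have d0: "0 \<le> \<delta>" by (simp add: \<delta>_def)
  have d2: "\<delta> \<le> r^(Q+2)"
    using order_trans[OF d power_decreasing[of "Q+2" "q+2*P+R+2*Q+3" r]] r unfolding \<delta>_def by auto
  have M: "max (norm w) (norm v) \<le> norm w + \<delta>"
    unfolding \<delta>_def using norm_triangle_ineq2[of v w] norm_minus_commute[of w v] by auto
  also have "\<dots> \<le> 2 * r^(Q+2)" using w d2 by simp
  also have "\<dots> \<le> r^(Q+1)" using r by (simp add: field_simps)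
  finally have M1: "max (norm w) (norm v) \<le> r^(Q+1)" .
  have "norm a * max (norm w) (norm v) ^ (n - 1) \<le> inverse (r^(n*Q+R)) * (r^(Q+1))^(n - 1)"
    by (intro mult_mono a power_mono M1) (use r in \<open>auto simp: le_max_iff_disj\<close>)
  also have "\<dots> \<le> inverse (r^(R+Q+1))"
  proof -
    have "(r^(Q+1))^(n - 1) * r^(R+Q+1) = r^(n*Q+R) * r^n"
    proof -
      obtain k where k: "n = Suc k" using n by (cases n) auto
      have "(Q+1)*(n-1) + (R+Q+1) = (n*Q+R) + n" by (simp add: k algebra_simps)
      hence "(r^(Q+1))^(n - 1) * r^(R+Q+1) = r^((n*Q+R) + n)" by (simp only: power_mult[symmetric] power_add[symmetric])
      thus ?thesis by (simp only: power_add)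
    qed
    also have "\<dots> \<le> r^(n*Q+R) * 1" using r by (intro mult_left_mono) (auto simp: power_le_one)
    finally show ?thesis using r by (simp add: field_simps)
  qed
  finally have aM: "norm a * max (norm w) (norm v) ^ (n - 1) \<le> inverse (r^(R+Q+1))" .
  have "norm a * (real n * \<delta> * max (norm w) (norm v) ^ (n - 1)) = real n * \<delta> * (norm a * max (norm w) (norm v) ^ (n - 1))"
    by simp
  also have "\<dots> \<le> inverse (r^P) * r^(q+2*P+R+2*Q+3) * inverse (r^(R+Q+1))"
    using n d aM d0 r unfolding \<delta>_def by (intro mult_mono) (auto simp: le_max_iff_disj)
  also have "\<dots> = r^(q+P) * r^(Q+2)"
  proof -
    have e: "q+2*P+R+2*Q+3 = (q+P) + (Q+2) + P + (R+Q+1)" by simp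
    show ?thesis unfolding e power_add using r by (simp add: field_simps)
  qed
  also have "\<dots> \<le> r^(q+P) * 1" using r by (intro mult_left_mono power_le_one) auto
  finally show ?thesis by (simp add: \<delta>_def)
qed

lemma PW:
  fixes w v a :: complex and r :: real
  assumes r: "0 < r" "r \<le> 1/2" and n: "real n \<le> inverse (r^P)"
    and a: "norm a \<le> inverse (r^(n*Q+R))" and aw: "norm (a * w^n) \<le> inverse (r^N0)"
    and d: "norm (w - v) \<le> r^(q+2*P+N0+R+2*Q+6)"
  shows "norm (a * (w^n - v^n)) \<le> r^(q+P)"
proof (cases "n = 0")
  case True thus ?thesis using r by simp
next
  case False
  hence n1: "1 \<le> n" by simp
  have "norm (a * (w^n - v^n)) \<le> norm a * (real n * norm (w - v) * max (norm w) (norm v) ^ (n - 1))"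
    unfolding norm_mult by (rule mult_left_mono[OF PW_diff]) simp
  also have "\<dots> \<le> r^(q+P)"
  proof (cases "r^(Q+2) \<le> norm w")
    case True
    have "norm (w - v) \<le> r^(q+2*P+N0+(Q+2)+2)"
      using order_trans[OF d power_decreasing[of "q+2*P+N0+(Q+2)+2" "q+2*P+N0+R+2*Q+6" r]] r by auto
    thus ?thesis by (intro PW_A[OF r n1 n aw True]) 
  next
    case False
    have "norm (w - v) \<le> r^(q+2*P+R+2*Q+3)"
      using d r by (intro order_trans[OF d] power_decreasing) auto
    thus ?thesis using False by (intro PW_B[OF r n1 n a]) auto
  qed
  finally show ?thesis .
qed

lemma PA:
  fixes c :: "nat \<Rightarrow> complex" and w v :: complex and K :: real
  assumes R: "ereal K \<le> conv_radius c" and S: "\<And>y. y \<in> closed_segment w v \<Longrightarrow> norm y < K"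
  shows "\<exists>p\<in>closed_segment w v. norm ((\<Sum>n. c n * v^n) - (\<Sum>n. c n * w^n))
            \<le> norm (\<Sum>n. diffs c n * p^n) * norm (v - w)"
proof -
  define f where "f = (\<lambda>y. \<Sum>n. c n * y^n)"
  define g where "g = (\<lambda>y. \<Sum>n. diffs c n * y^n)"
  have sm: "summable (\<lambda>n. c n * y^n)" if "norm y < K" for y
  proof (rule summable_in_conv_radius)
    have "ereal (norm y) < ereal K" using that by simp
    thus "ereal (norm y) < conv_radius c" using R by (rule order_less_le_trans)
  qed
  have df: "(f has_field_derivative g y) (at y)" if "norm y < K" for y
    unfolding f_def g_def by (rule termdiffs_strong'[OF sm that]) 
  have smd: "summable (\<lambda>n. diffs c n * y^n)" if "norm y < K" for y
    using termdiff_converges[of y K c] sm that by blast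
  have dg: "(g has_field_derivative (\<Sum>n. diffs (diffs c) n * y^n)) (at y)" if "norm y < K" for y
    unfolding g_def by (rule termdiffs_strong'[OF smd that])
  have cont: "continuous_on (closed_segment w v) (\<lambda>y. norm (g y))"
  proof (rule continuous_at_imp_continuous_on, rule ballI)
    fix y assume "y \<in> closed_segment w v"
    hence "isCont g y" using DERIV_isCont[OF dg[OF S]] by blast
    thus "isCont (\<lambda>y. norm (g y)) y" by (rule isCont_norm)
  qed
  have ne: "closed_segment w v \<noteq> {}" using ends_in_segment(1)[of w v] by blast
  obtain p where p: "p \<in> closed_segment w v" "\<forall>y\<in>closed_segment w v. norm (g y) \<le> norm (g p)"
    using continuous_attains_sup[OF compact_segment ne cont] by blast
  have "norm (f v - f w) \<le> norm (g p) * norm (v - w)"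
  proof (rule field_differentiable_bound[of "closed_segment w v" f g "norm (g p)" v w, OF convex_closed_segment])
    fix y assume y: "y \<in> closed_segment w v"
    show "(f has_field_derivative g y) (at y within closed_segment w v)"
      using df[OF S[OF y]] by (rule has_field_derivative_at_within)
  next
    fix y assume "y \<in> closed_segment w v"
    thus "norm (g y) \<le> norm (g p)" using p by blast
  qed (rule ends_in_segment)+
  thus ?thesis using p(1) unfolding f_def g_def by blast
qed

context
  fixes \<rho> :: "real \<Rightarrow> real"
  assumes gauge: "rho_gauge \<rho>"
begin

lemma ev_rho: "\<forall>\<^sub>F \<epsilon> in at_right 0. 0 < \<rho> \<epsilon> \<and> \<rho> \<epsilon> \<le> 1/2"
proof -
  have t: "(\<rho> \<longlongrightarrow> 0) (at_right 0)" and p: "\<forall>\<epsilon>\<in>{0<..1}. 0 < \<rho> \<epsilon> \<and> \<rho> \<epsilon> \<le> 1"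
    using gauge by (auto simp: rho_gauge_def)
  have "\<forall>\<^sub>F \<epsilon> in at_right 0. \<rho> \<epsilon> < 1/2"
    using order_tendstoD(2)[OF t, of "1/2"] by simp
  moreover have "\<forall>\<^sub>F \<epsilon> in at_right (0::real). \<epsilon> \<in> {0<..1}"
    by (simp add: eventually_at_right_field) (metis zero_less_one less_eq_real_def)
  ultimately show ?thesis
    by eventually_elim (use p in auto)
qed

lemma negl_iff: "rho_negligible \<rho> x \<longleftrightarrow> (\<forall>q. \<forall>\<^sub>F \<epsilon> in at_right 0. norm (x \<epsilon>) \<le> \<rho> \<epsilon> ^ q)"
  by (simp add: rho_negligible_def)

lemma negl_le:
  assumes "rho_negligible \<rho> x" "\<forall>\<^sub>F \<epsilon> in at_right 0. norm (y \<epsilon>) \<le> norm (x \<epsilon>)"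
  shows "rho_negligible \<rho> y"
  unfolding rho_negligible_def
proof
  fix q
  show "\<forall>\<^sub>F \<epsilon> in at_right 0. norm (y \<epsilon>) \<le> \<rho> \<epsilon> ^ q"
    using assms(2) assms(1)[unfolded rho_negligible_def, rule_format, of q]
    by eventually_elim auto
qed

lemma negl_le_real:
  assumes "rho_negligible \<rho> x" "\<forall>\<^sub>F \<epsilon> in at_right 0. norm (y \<epsilon>) \<le> x \<epsilon>"
  shows "rho_negligible \<rho> y"
  using assms by (intro negl_le[OF assms(1)]) (auto elim!: eventually_mono)

lemma negl_add:
  fixes x y :: "real \<Rightarrow> 'a::real_normed_vector"
  assumes "rho_negligible \<rho> x" "rho_negligible \<rho> y"
  shows "rho_negligible \<rho> (\<lambda>\<epsilon>. x \<epsilon> + y \<epsilon>)"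
  unfolding rho_negligible_def
proof
  fix q
  show "\<forall>\<^sub>F \<epsilon> in at_right 0. norm (x \<epsilon> + y \<epsilon>) \<le> \<rho> \<epsilon> ^ q"
    using assms(1)[unfolded rho_negligible_def, rule_format, of "Suc q"]
      assms(2)[unfolded rho_negligible_def, rule_format, of "Suc q"] ev_rho
  proof eventually_elim
    case (elim \<epsilon>)
    have "norm (x \<epsilon> + y \<epsilon>) \<le> 2 * \<rho> \<epsilon> ^ Suc q" using elim norm_triangle_ineq[of "x \<epsilon>" "y \<epsilon>"] by linarith
    also have "\<dots> = (2 * \<rho> \<epsilon>) * \<rho> \<epsilon> ^ q" by simp
    also have "\<dots> \<le> 1 * \<rho> \<epsilon> ^ q" using elim by (intro mult_right_mono) auto
    finally show ?case by simp
  qed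
qed

lemma negl_minus:
  fixes x :: "real \<Rightarrow> 'a::real_normed_vector"
  assumes "rho_negligible \<rho> x"
  shows "rho_negligible \<rho> (\<lambda>\<epsilon>. - x \<epsilon>)"
  using assms by (simp add: rho_negligible_def)

lemma negl_diff:
  fixes x y :: "real \<Rightarrow> 'a::real_normed_vector"
  assumes "rho_negligible \<rho> x" "rho_negligible \<rho> y"
  shows "rho_negligible \<rho> (\<lambda>\<epsilon>. x \<epsilon> - y \<epsilon>)"
  using negl_add[OF assms(1) negl_minus[OF assms(2)]] by simp

lemma negl_zero: "rho_negligible \<rho> (\<lambda>\<epsilon>. 0::'a::real_normed_vector)"
  unfolding rho_negligible_def using ev_rho by (auto elim!: eventually_mono)

lemma negl_cong:
  assumes "rho_negligible \<rho> x" "\<forall>\<^sub>F \<epsilon> in at_right 0. y \<epsilon> = x \<epsilon>"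
  shows "rho_negligible \<rho> y"
  using assms by (intro negl_le[OF assms(1)]) (auto elim!: eventually_mono)

lemma mod_iff: "rho_moderate \<rho> x \<longleftrightarrow> (\<exists>N. \<forall>\<^sub>F \<epsilon> in at_right 0. norm (x \<epsilon>) \<le> inverse (\<rho> \<epsilon> ^ N))"
  by (simp add: rho_moderate_def)

lemma mod_le:
  assumes "rho_moderate \<rho> x" "\<forall>\<^sub>F \<epsilon> in at_right 0. norm (y \<epsilon>) \<le> norm (x \<epsilon>)"
  shows "rho_moderate \<rho> y"
proof -
  obtain N where "\<forall>\<^sub>F \<epsilon> in at_right 0. norm (x \<epsilon>) \<le> inverse (\<rho> \<epsilon> ^ N)" using assms(1) by (auto simp: rho_moderate_def)
  with assms(2) have "\<forall>\<^sub>F \<epsilon> in at_right 0. norm (y \<epsilon>) \<le> inverse (\<rho> \<epsilon> ^ N)" by eventually_elim auto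
  thus ?thesis by (auto simp: rho_moderate_def)
qed

lemma mod_cong:
  assumes "rho_moderate \<rho> x" "\<forall>\<^sub>F \<epsilon> in at_right 0. y \<epsilon> = x \<epsilon>"
  shows "rho_moderate \<rho> y"
  using assms by (intro mod_le[OF assms(1)]) (auto elim!: eventually_mono)

lemma mod_add:
  fixes x y :: "real \<Rightarrow> 'a::real_normed_vector"
  assumes "rho_moderate \<rho> x" "rho_moderate \<rho> y"
  shows "rho_moderate \<rho> (\<lambda>\<epsilon>. x \<epsilon> + y \<epsilon>)"
proof -
  obtain N where N: "\<forall>\<^sub>F \<epsilon> in at_right 0. norm (x \<epsilon>) \<le> inverse (\<rho> \<epsilon> ^ N)" using assms(1) by (auto simp: rho_moderate_def)
  obtain M where M: "\<forall>\<^sub>F \<epsilon> in at_right 0. norm (y \<epsilon>) \<le> inverse (\<rho> \<epsilon> ^ M)" using assms(2) by (auto simp: rho_moderate_def)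
  have "\<forall>\<^sub>F \<epsilon> in at_right 0. norm (x \<epsilon> + y \<epsilon>) \<le> inverse (\<rho> \<epsilon> ^ (N+M+1))"
    using N M ev_rho
  proof eventually_elim
    case (elim \<epsilon>)
    define r where "r = \<rho> \<epsilon>"
    have r: "0 < r" "r \<le> 1/2" using elim by (auto simp: r_def)
    have "inverse (r ^ N) \<le> inverse (r ^ (N+M))"
      using r by (intro le_imp_inverse_le power_decreasing) auto
    moreover have "inverse (r ^ M) \<le> inverse (r ^ (N+M))"
      using r by (intro le_imp_inverse_le power_decreasing) auto
    moreover have "2 * inverse (r ^ (N+M)) \<le> inverse (r ^ (N+M+1))"
      using r by (simp add: field_simps)
    ultimately show ?case using elim norm_triangle_ineq[of "x \<epsilon>" "y \<epsilon>"] unfolding r_def by linarith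
  qed
  thus ?thesis unfolding rho_moderate_def by (rule exI)
qed

lemma negl_mod: "rho_negligible \<rho> x \<Longrightarrow> rho_moderate \<rho> x"
  unfolding rho_negligible_def rho_moderate_def
  apply (rule exI[of _ 0])
  apply (drule spec[of _ 0])
  by simp

lemma mod_minus:
  fixes x :: "real \<Rightarrow> 'a::real_normed_vector"
  shows "rho_moderate \<rho> x \<Longrightarrow> rho_moderate \<rho> (\<lambda>\<epsilon>. - x \<epsilon>)"
  by (simp add: rho_moderate_def)

lemma mod_diff:
  fixes x y :: "real \<Rightarrow> 'a::real_normed_vector"
  assumes "rho_moderate \<rho> x" "rho_moderate \<rho> y"
  shows "rho_moderate \<rho> (\<lambda>\<epsilon>. x \<epsilon> - y \<epsilon>)"
  using mod_add[OF assms(1) mod_minus[OF assms(2)]] by simp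

lemma mod_eq: "rho_moderate \<rho> x \<Longrightarrow> rho_eq \<rho> y x \<Longrightarrow> rho_moderate \<rho> y"
  unfolding rho_eq_def using mod_add[of x "\<lambda>\<epsilon>. y \<epsilon> - x \<epsilon>"] negl_mod by auto

lemma rho_eq_sym: "rho_eq \<rho> x y \<Longrightarrow> rho_eq \<rho> y x"
  unfolding rho_eq_def rho_negligible_def by (simp add: norm_minus_commute)

lemma rho_eq_trans: "rho_eq \<rho> x y \<Longrightarrow> rho_eq \<rho> y z \<Longrightarrow> rho_eq \<rho> x z"
  unfolding rho_eq_def using negl_add[of "\<lambda>\<epsilon>. x \<epsilon> - y \<epsilon>" "\<lambda>\<epsilon>. y \<epsilon> - z \<epsilon>"] by simp

lemma nat_eq_ev:
  assumes "rho_eq \<rho> (\<lambda>\<epsilon>. real (K \<epsilon>)) (\<lambda>\<epsilon>. real (L \<epsilon>))"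
  shows "\<forall>\<^sub>F \<epsilon> in at_right 0. K \<epsilon> = L \<epsilon>"
proof -
  have "\<forall>\<^sub>F \<epsilon> in at_right 0. norm (real (K \<epsilon>) - real (L \<epsilon>)) \<le> \<rho> \<epsilon> ^ 1"
    using assms unfolding rho_eq_def rho_negligible_def by blast
  with ev_rho show ?thesis
  proof eventually_elim
    case (elim \<epsilon>)
    hence "\<bar>real (K \<epsilon>) - real (L \<epsilon>)\<bar> < 1" by simp
    thus ?case by linarith
  qed
qed

lemma hyp_ni:
  assumes "ni_choice \<rho> ni" "hypernat \<rho> N"
  shows "hypernat \<rho> (ni N)" "\<forall>\<^sub>F \<epsilon> in at_right 0. ni N \<epsilon> = N \<epsilon>"
proof -
  have e: "rho_eq \<rho> (\<lambda>\<epsilon>. real (ni N \<epsilon>)) (\<lambda>\<epsilon>. real (N \<epsilon>))"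
    using assms unfolding ni_choice_def by blast
  show "hypernat \<rho> (ni N)" using mod_eq[OF _ e] assms(2) by (simp add: hypernat_def)
  show "\<forall>\<^sub>F \<epsilon> in at_right 0. ni N \<epsilon> = N \<epsilon>" by (rule nat_eq_ev[OF e])
qed

lemma hyp_le:
  assumes "hypernat \<rho> N" "\<And>\<epsilon>. K \<epsilon> \<le> N \<epsilon>"
  shows "hypernat \<rho> K"
  using assms unfolding hypernat_def by (intro mod_le[OF assms(1)[unfolded hypernat_def]]) auto

lemma hyp_Suc:
  assumes "hypernat \<rho> N"
  shows "hypernat \<rho> (\<lambda>\<epsilon>. Suc (N \<epsilon>))"
proof -
  have "rho_moderate \<rho> (\<lambda>\<epsilon>. (1::real))"
    unfolding rho_moderate_def by (rule exI[of _ 0]) simp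
  from mod_add[OF assms[unfolded hypernat_def] this] show ?thesis
    by (simp add: hypernat_def add.commute)
qed

lemma PS_le:
  assumes "ni_choice \<rho> ni" "moderate_over_hypersums \<rho> ni t" "hypernat \<rho> j"
  shows "rho_moderate \<rho> (\<lambda>\<epsilon>. \<Sum>n\<le>j \<epsilon>. t n \<epsilon>)"
proof -
  have "rho_moderate \<rho> (hypersum ni t j)" using assms by (auto simp: moderate_over_hypersums_def)
  moreover have "\<forall>\<^sub>F \<epsilon> in at_right 0. (\<Sum>n\<le>j \<epsilon>. t n \<epsilon>) = hypersum ni t j \<epsilon>"
    using hyp_ni(2)[OF assms(1,3)] by eventually_elim (simp add: hypersum_def)
  ultimately show ?thesis by (rule mod_cong)
qed

lemma PS_less:
  assumes "ni_choice \<rho> ni" "moderate_over_hypersums \<rho> ni t" "hypernat \<rho> j"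
  shows "rho_moderate \<rho> (\<lambda>\<epsilon>. \<Sum>n<j \<epsilon>. t n \<epsilon>)"
proof -
  have h: "hypernat \<rho> (\<lambda>\<epsilon>. j \<epsilon> - 1)" by (rule hyp_le[OF assms(3)]) auto
  have m: "rho_moderate \<rho> (\<lambda>\<epsilon>. \<Sum>n\<le>j \<epsilon> - 1. t n \<epsilon>)" by (rule PS_le[OF assms(1,2) h])
  show ?thesis
  proof (rule mod_le[OF m], rule always_eventually, rule allI)
    fix \<epsilon>
    show "norm (\<Sum>n<j \<epsilon>. t n \<epsilon>) \<le> norm (\<Sum>n\<le>j \<epsilon> - 1. t n \<epsilon>)"
    proof (cases "j \<epsilon> = 0")
      case False
      hence "{..<j \<epsilon>} = {..j \<epsilon> - 1}" by auto
      thus ?thesis by simp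
    qed simp
  qed
qed

lemma SE:
  fixes A B :: "nat \<Rightarrow> real \<Rightarrow> complex" and u :: "real \<Rightarrow> real"
  assumes "strong_eq \<rho> A B" "rho_moderate \<rho> u"
  shows "\<forall>\<^sub>F \<epsilon> in at_right 0. \<forall>n. cmod (A n \<epsilon> - B n \<epsilon>) * \<bar>u \<epsilon>\<bar> ^ n \<le> \<rho> \<epsilon> ^ (n*q+r)"
proof -
  obtain N where N: "\<forall>\<^sub>F \<epsilon> in at_right 0. norm (u \<epsilon>) \<le> inverse (\<rho> \<epsilon> ^ N)"
    using assms(2) by (auto simp: rho_moderate_def)
  have S: "\<forall>\<^sub>F \<epsilon> in at_right 0. \<forall>n. cmod (A n \<epsilon> - B n \<epsilon>) \<le> \<rho> \<epsilon> ^ (n*(q+N)+r)"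
    using assms(1) by (auto simp: strong_eq_def)
  from N S ev_rho show ?thesis
  proof eventually_elim
    case (elim \<epsilon>)
    show ?case
    proof
      fix n
      have r: "0 < \<rho> \<epsilon>" using elim by auto
      have "cmod (A n \<epsilon> - B n \<epsilon>) * \<bar>u \<epsilon>\<bar> ^ n \<le> \<rho> \<epsilon> ^ (n*(q+N)+r) * inverse (\<rho> \<epsilon> ^ N) ^ n"
        using elim by (intro mult_mono power_mono) auto
      also have "\<dots> = \<rho> \<epsilon> ^ (n*q+r)"
        using r by (simp add: power_add power_mult field_simps algebra_simps power_mult_distrib[symmetric] power_inverse flip: power_mult)
      finally show "cmod (A n \<epsilon> - B n \<epsilon>) * \<bar>u \<epsilon>\<bar> ^ n \<le> \<rho> \<epsilon> ^ (n*q+r)" .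
    qed
  qed
qed

end

lemma GL:
  fixes t :: "nat \<Rightarrow> 'a::banach"
  assumes "0 \<le> x" "x \<le> 1/2" "\<And>n. norm (t n) \<le> C * x ^ n"
  shows "summable t" "norm (suminf t) \<le> 2 * C"
proof -
  have g: "summable (\<lambda>n. x ^ n)" using assms by (intro summable_geometric) auto
  hence g2: "summable (\<lambda>n. C * x ^ n)" by (rule summable_mult)
  show st: "summable t" by (rule summable_comparison_test[OF _ g2]) (use assms(3) in auto)
  have sn: "summable (\<lambda>n. norm (t n))" by (rule summable_comparison_test[OF _ g2]) (use assms(3) in auto)
  have "norm (suminf t) \<le> (\<Sum>n. norm (t n))" by (rule summable_norm[OF sn])
  also have "\<dots> \<le> (\<Sum>n. C * x ^ n)" by (rule suminf_le[OF _ sn g2]) (use assms(3) in auto)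
  also have "\<dots> = C / (1 - x)" using suminf_geometric[of x] assms by (simp add: suminf_mult divide_simps)
  also have "\<dots> \<le> 2 * C"
  proof -
    have "0 \<le> C" using assms(3)[of 0] norm_ge_zero[of "t 0"] by (metis mult.right_neutral power_0 order_trans)
    thus ?thesis using assms by (simp add: field_simps mult_left_le)
  qed
  finally show "norm (suminf t) \<le> 2 * C" .
qed

lemma rad_conv: "rad a \<epsilon> = conv_radius (\<lambda>n. a n \<epsilon>)"
proof -
  define L where "L = limsup (\<lambda>n. ereal (root n (cmod (a n \<epsilon>))))"
  have "0 = limsup (\<lambda>n. (0::ereal))" by (subst Limsup_const) simp_all
  also have "\<dots> \<le> L" unfolding L_def
    by (intro Limsup_mono) (simp_all add: real_root_ge_zero)
  finally have L0: "0 \<le> L" .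
  have "ereal_recip L = inverse L"
    using L0 by (cases L) (auto simp: ereal_recip_def zero_ereal_def one_ereal_def divide_ereal_def inverse_eq_divide)
  thus ?thesis by (simp add: rad_def conv_radius_def L_def)
qed

context
  fixes \<rho> :: "real \<Rightarrow> real"
  assumes gauge: "rho_gauge \<rho>"
begin

lemma CR:
  fixes A B :: "nat \<Rightarrow> real \<Rightarrow> complex" and X :: "real \<Rightarrow> real"
  assumes "strong_eq \<rho> A B" "rho_moderate \<rho> X"
  shows "\<forall>\<^sub>F \<epsilon> in at_right 0. ereal (X \<epsilon>) < conv_radius (\<lambda>n. A n \<epsilon> - B n \<epsilon>)"
proof -
  obtain N where N: "\<forall>\<^sub>F \<epsilon> in at_right 0. norm (X \<epsilon>) \<le> inverse (\<rho> \<epsilon> ^ N)"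
    using assms(2) by (auto simp: rho_moderate_def)
  define u where "u = (\<lambda>\<epsilon>. inverse (\<rho> \<epsilon> ^ Suc N))"
  have um: "rho_moderate \<rho> u" unfolding rho_moderate_def u_def
    by (rule exI[of _ "Suc N"]) (use ev_rho[OF gauge] in \<open>auto elim!: eventually_mono\<close>)
  have S: "\<forall>\<^sub>F \<epsilon> in at_right 0. \<forall>n. cmod (A n \<epsilon> - B n \<epsilon>) * \<bar>u \<epsilon>\<bar> ^ n \<le> \<rho> \<epsilon> ^ (n*1+0)"
    by (rule SE[OF gauge assms(1) um])
  from S N ev_rho[OF gauge] show ?thesis
  proof eventually_elim
    case (elim \<epsilon>)
    have r: "0 < \<rho> \<epsilon>" "\<rho> \<epsilon> \<le> 1/2" using elim by auto
    have u0: "0 < u \<epsilon>" using r by (simp add: u_def)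
    have "summable (\<lambda>n. (A n \<epsilon> - B n \<epsilon>) * complex_of_real (u \<epsilon>) ^ n)"
      by (rule GL(1)[of "\<rho> \<epsilon>" _ 1]) (use r elim u0 in \<open>auto simp: norm_mult norm_power\<close>)
    hence "ereal (norm (complex_of_real (u \<epsilon>))) \<le> conv_radius (\<lambda>n. A n \<epsilon> - B n \<epsilon>)"
      by (rule conv_radius_geI)
    moreover have "X \<epsilon> < u \<epsilon>"
    proof -
      have "X \<epsilon> \<le> inverse (\<rho> \<epsilon> ^ N)" using elim by auto
      also have "\<dots> < inverse (\<rho> \<epsilon> ^ Suc N)"
        using r by (simp add: field_simps)
      finally show ?thesis by (simp add: u_def)
    qed
    ultimately show ?case using u0
    proof -
      assume a: "ereal (norm (complex_of_real (u \<epsilon>))) \<le> conv_radius (\<lambda>n. A n \<epsilon> - B n \<epsilon>)" "X \<epsilon> < u \<epsilon>" "0 < u \<epsilon>"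
      have "ereal (X \<epsilon>) < ereal (u \<epsilon>)" using a(2) by simp
      also have "ereal (u \<epsilon>) = ereal (norm (complex_of_real (u \<epsilon>)))" using a(3) by simp
      finally show ?thesis using a(1) by (rule order_less_le_trans)
    qed
  qed
qed

end

lemma fin_argmax:
  fixes f :: "nat \<Rightarrow> real"
  assumes "finite S" "S \<noteq> {}"
  shows "\<exists>n\<in>S. \<forall>m\<in>S. f m \<le> f n"
proof -
  have "Max (f ` S) \<in> f ` S" using assms by (intro Max_in) auto
  then obtain n where n: "n \<in> S" "f n = Max (f ` S)" by auto
  have "\<forall>m\<in>S. f m \<le> f n" using assms n by auto
  thus ?thesis using n(1) by blast
qed

context
  fixes \<rho> :: "real \<Rightarrow> real"
  assumes gauge: "rho_gauge \<rho>"
begin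

lemma term_bound:
  assumes ni: "ni_choice \<rho> ni" and mh: "moderate_over_hypersums \<rho> ni t" and K: "hypernat \<rho> K"
  shows "\<exists>N. \<forall>\<^sub>F \<epsilon> in at_right 0. \<forall>n<K \<epsilon>. norm (t n \<epsilon>) \<le> inverse (\<rho> \<epsilon> ^ N)"
proof -
  define P where "P = (\<lambda>\<epsilon> n. n < K \<epsilon> \<and> (\<forall>m<K \<epsilon>. norm (t m \<epsilon>) \<le> norm (t n \<epsilon>)))"
  define j where "j = (\<lambda>\<epsilon>. if K \<epsilon> = 0 then 0 else SOME n. P \<epsilon> n)"
  have jP: "P \<epsilon> (j \<epsilon>)" if "K \<epsilon> \<noteq> 0" for \<epsilon>
  proof -
    have "\<exists>n\<in>{..<K \<epsilon>}. \<forall>m\<in>{..<K \<epsilon>}. norm (t m \<epsilon>) \<le> norm (t n \<epsilon>)"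
      by (rule fin_argmax) (use that in auto)
    hence "\<exists>n. P \<epsilon> n" by (auto simp: P_def)
    thus ?thesis using that unfolding j_def by (simp add: someI_ex)
  qed
  have jK: "j \<epsilon> \<le> K \<epsilon>" for \<epsilon>
    using jP[of \<epsilon>] by (cases "K \<epsilon> = 0") (auto simp: j_def P_def)
  have hj: "hypernat \<rho> j" by (rule hyp_le[OF gauge K jK])
  have m1: "rho_moderate \<rho> (\<lambda>\<epsilon>. \<Sum>n<Suc (j \<epsilon>). t n \<epsilon>)"
    by (rule PS_less[OF gauge ni mh hyp_Suc[OF gauge hj]])
  have m2: "rho_moderate \<rho> (\<lambda>\<epsilon>. \<Sum>n<j \<epsilon>. t n \<epsilon>)"
    by (rule PS_less[OF gauge ni mh hj])
  have "rho_moderate \<rho> (\<lambda>\<epsilon>. (\<Sum>n<Suc (j \<epsilon>). t n \<epsilon>) - (\<Sum>n<j \<epsilon>. t n \<epsilon>))"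
    by (rule mod_diff[OF gauge m1 m2])
  hence "rho_moderate \<rho> (\<lambda>\<epsilon>. t (j \<epsilon>) \<epsilon>)" by simp
  then obtain N where N: "\<forall>\<^sub>F \<epsilon> in at_right 0. norm (t (j \<epsilon>) \<epsilon>) \<le> inverse (\<rho> \<epsilon> ^ N)"
    by (auto simp: rho_moderate_def)
  have "\<forall>\<^sub>F \<epsilon> in at_right 0. \<forall>n<K \<epsilon>. norm (t n \<epsilon>) \<le> inverse (\<rho> \<epsilon> ^ N)"
    using N
  proof eventually_elim
    case (elim \<epsilon>)
    show ?case
    proof (intro allI impI)
      fix n assume n: "n < K \<epsilon>"
      hence "K \<epsilon> \<noteq> 0" by auto
      hence "norm (t n \<epsilon>) \<le> norm (t (j \<epsilon>) \<epsilon>)" using jP[of \<epsilon>] n by (auto simp: P_def)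
      thus "norm (t n \<epsilon>) \<le> inverse (\<rho> \<epsilon> ^ N)" using elim by linarith
    qed
  qed
  thus ?thesis by blast
qed

lemma KL_W:
  fixes A :: "nat \<Rightarrow> real \<Rightarrow> complex" and W V :: "real \<Rightarrow> complex"
  assumes ni: "ni_choice \<rho> ni" and mh: "moderate_over_hypersums \<rho> ni (\<lambda>n \<epsilon>. A n \<epsilon> * W \<epsilon> ^ n)"
    and wm: "weakly_moderate \<rho> A" and eq: "rho_eq \<rho> W V" and K: "hypernat \<rho> K"
  shows "rho_negligible \<rho> (\<lambda>\<epsilon>. \<Sum>n<K \<epsilon>. A n \<epsilon> * (W \<epsilon> ^ n - V \<epsilon> ^ n))"
proof -
  obtain N0 where N0: "\<forall>\<^sub>F \<epsilon> in at_right 0. \<forall>n<K \<epsilon>. norm (A n \<epsilon> * W \<epsilon> ^ n) \<le> inverse (\<rho> \<epsilon> ^ N0)"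
    using term_bound[OF ni mh K] by auto
  obtain Q R where QR: "\<forall>\<^sub>F \<epsilon> in at_right 0. \<forall>n. cmod (A n \<epsilon>) \<le> inverse (\<rho> \<epsilon> ^ (n*Q + R))"
    using wm by (auto simp: weakly_moderate_def)
  obtain P where P: "\<forall>\<^sub>F \<epsilon> in at_right 0. norm (real (K \<epsilon>)) \<le> inverse (\<rho> \<epsilon> ^ P)"
    using K by (auto simp: hypernat_def rho_moderate_def)
  show ?thesis unfolding rho_negligible_def
  proof
    fix q
    have d: "\<forall>\<^sub>F \<epsilon> in at_right 0. norm (W \<epsilon> - V \<epsilon>) \<le> \<rho> \<epsilon> ^ (q+2*P+N0+R+2*Q+6)"
      using eq by (auto simp: rho_eq_def rho_negligible_def)
    from d N0 QR P ev_rho[OF gauge]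
    show "\<forall>\<^sub>F \<epsilon> in at_right 0. norm (\<Sum>n<K \<epsilon>. A n \<epsilon> * (W \<epsilon> ^ n - V \<epsilon> ^ n)) \<le> \<rho> \<epsilon> ^ q"
    proof eventually_elim
      case (elim \<epsilon>)
      have r: "0 < \<rho> \<epsilon>" "\<rho> \<epsilon> \<le> 1/2" using elim by auto
      have "norm (\<Sum>n<K \<epsilon>. A n \<epsilon> * (W \<epsilon> ^ n - V \<epsilon> ^ n)) \<le> (\<Sum>n<K \<epsilon>. norm (A n \<epsilon> * (W \<epsilon> ^ n - V \<epsilon> ^ n)))"
        by (rule norm_sum)
      also have "\<dots> \<le> (\<Sum>n<K \<epsilon>. \<rho> \<epsilon> ^ (q+P))"
      proof (rule sum_mono)
        fix n assume n: "n \<in> {..<K \<epsilon>}"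
        have "real n \<le> inverse (\<rho> \<epsilon> ^ P)" using n elim by auto
        thus "norm (A n \<epsilon> * (W \<epsilon> ^ n - V \<epsilon> ^ n)) \<le> \<rho> \<epsilon> ^ (q+P)"
          using n elim by (intro PW[OF r]) auto
      qed
      also have "\<dots> = real (K \<epsilon>) * \<rho> \<epsilon> ^ (q+P)" by simp
      also have "\<dots> \<le> inverse (\<rho> \<epsilon> ^ P) * \<rho> \<epsilon> ^ (q+P)"
        using elim r by (intro mult_right_mono) auto
      also have "\<dots> = \<rho> \<epsilon> ^ q" using r by (simp add: power_add)
      finally show ?case .
    qed
  qed
qed

lemma KL_AB:
  fixes A B :: "nat \<Rightarrow> real \<Rightarrow> complex" and V :: "real \<Rightarrow> complex"
  assumes se: "strong_eq \<rho> A B" and Vm: "rho_moderate \<rho> V" and K: "hypernat \<rho> K"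
  shows "rho_negligible \<rho> (\<lambda>\<epsilon>. \<Sum>n<K \<epsilon>. (A n \<epsilon> - B n \<epsilon>) * V \<epsilon> ^ n)"
proof -
  obtain P where P: "\<forall>\<^sub>F \<epsilon> in at_right 0. norm (real (K \<epsilon>)) \<le> inverse (\<rho> \<epsilon> ^ P)"
    using K by (auto simp: hypernat_def rho_moderate_def)
  have um: "rho_moderate \<rho> (\<lambda>\<epsilon>. norm (V \<epsilon>))" using Vm by (simp add: rho_moderate_def)
  show ?thesis unfolding rho_negligible_def
  proof
    fix q
    from SE[OF gauge se um, of 0 "q+P"] P ev_rho[OF gauge]
    show "\<forall>\<^sub>F \<epsilon> in at_right 0. norm (\<Sum>n<K \<epsilon>. (A n \<epsilon> - B n \<epsilon>) * V \<epsilon> ^ n) \<le> \<rho> \<epsilon> ^ q"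
    proof eventually_elim
      case (elim \<epsilon>)
      have r: "0 < \<rho> \<epsilon>" "\<rho> \<epsilon> \<le> 1/2" using elim by auto
      have "norm (\<Sum>n<K \<epsilon>. (A n \<epsilon> - B n \<epsilon>) * V \<epsilon> ^ n) \<le> (\<Sum>n<K \<epsilon>. norm ((A n \<epsilon> - B n \<epsilon>) * V \<epsilon> ^ n))"
        by (rule norm_sum)
      also have "\<dots> \<le> (\<Sum>n<K \<epsilon>. \<rho> \<epsilon> ^ (q+P))"
      proof (rule sum_mono)
        fix n
        show "norm ((A n \<epsilon> - B n \<epsilon>) * V \<epsilon> ^ n) \<le> \<rho> \<epsilon> ^ (q+P)"
          using elim by (auto simp: norm_mult norm_power)
      qed
      also have "\<dots> = real (K \<epsilon>) * \<rho> \<epsilon> ^ (q+P)" by simp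
      also have "\<dots> \<le> inverse (\<rho> \<epsilon> ^ P) * \<rho> \<epsilon> ^ (q+P)"
        using elim r by (intro mult_right_mono) auto
      also have "\<dots> = \<rho> \<epsilon> ^ q" using r by (simp add: power_add)
      finally show ?case .
    qed
  qed
qed

lemma KL:
  fixes A B :: "nat \<Rightarrow> real \<Rightarrow> complex" and W V :: "real \<Rightarrow> complex"
  assumes ni: "ni_choice \<rho> ni" and mh: "moderate_over_hypersums \<rho> ni (\<lambda>n \<epsilon>. A n \<epsilon> * W \<epsilon> ^ n)"
    and wm: "weakly_moderate \<rho> A" and eq: "rho_eq \<rho> W V" and se: "strong_eq \<rho> A B"
    and Vm: "rho_moderate \<rho> V" and K: "hypernat \<rho> K"
  shows "rho_negligible \<rho> (\<lambda>\<epsilon>. \<Sum>n<K \<epsilon>. A n \<epsilon> * W \<epsilon> ^ n - B n \<epsilon> * V \<epsilon> ^ n)"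
proof -
  have "rho_negligible \<rho> (\<lambda>\<epsilon>. (\<Sum>n<K \<epsilon>. A n \<epsilon> * (W \<epsilon> ^ n - V \<epsilon> ^ n)) + (\<Sum>n<K \<epsilon>. (A n \<epsilon> - B n \<epsilon>) * V \<epsilon> ^ n))"
    by (rule negl_add[OF gauge KL_W[OF ni mh wm eq K] KL_AB[OF se Vm K]])
  thus ?thesis by (simp add: algebra_simps sum.distrib[symmetric] sum_subtractf[symmetric])
qed

end

context
  fixes \<rho> :: "real \<Rightarrow> real"
  assumes gauge: "rho_gauge \<rho>"
begin

lemma MV:
  fixes A :: "nat \<Rightarrow> real \<Rightarrow> complex" and Z C V :: "real \<Rightarrow> complex"
  assumes cc: "cond_c \<rho> A Z C"
    and rad: "\<forall>\<^sub>F \<epsilon> in at_right 0. ereal (norm (Z \<epsilon> - C \<epsilon>) + \<rho> \<epsilon> ^ m) \<le> conv_radius (\<lambda>n. A n \<epsilon>)"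
    and eq: "rho_eq \<rho> V (\<lambda>\<epsilon>. Z \<epsilon> - C \<epsilon>)"
  shows "rho_negligible \<rho> (\<lambda>\<epsilon>. (\<Sum>n. A n \<epsilon> * V \<epsilon> ^ n) - (\<Sum>n. A n \<epsilon> * (Z \<epsilon> - C \<epsilon>) ^ n))"
proof -
  define W where "W = (\<lambda>\<epsilon>. Z \<epsilon> - C \<epsilon>)"
  define Qp where "Qp = (\<lambda>\<epsilon> p. p \<in> closed_segment (W \<epsilon>) (V \<epsilon>) \<and>
     norm ((\<Sum>n. A n \<epsilon> * V \<epsilon> ^ n) - (\<Sum>n. A n \<epsilon> * W \<epsilon> ^ n))
       \<le> norm (\<Sum>n. diffs (\<lambda>n. A n \<epsilon>) n * p ^ n) * norm (V \<epsilon> - W \<epsilon>))"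
  define pt where "pt = (\<lambda>\<epsilon>. if \<exists>p. Qp \<epsilon> p then SOME p. Qp \<epsilon> p else W \<epsilon>)"
  have ptQ: "Qp \<epsilon> (pt \<epsilon>)" if "\<exists>p. Qp \<epsilon> p" for \<epsilon>
    using that unfolding pt_def by (simp add: someI_ex)
  have pt_seg: "pt \<epsilon> \<in> closed_segment (W \<epsilon>) (V \<epsilon>)" for \<epsilon>
  proof (cases "\<exists>p. Qp \<epsilon> p")
    case True thus ?thesis using ptQ[OF True] by (simp add: Qp_def)
  next
    case False
    have "pt \<epsilon> = W \<epsilon>" unfolding pt_def using False by (rule if_not_P)
    thus ?thesis by simp
  qed
  define zh where "zh = (\<lambda>\<epsilon>. pt \<epsilon> + C \<epsilon>)"
  have nVW: "rho_negligible \<rho> (\<lambda>\<epsilon>. V \<epsilon> - W \<epsilon>)" using eq by (simp add: rho_eq_def W_def)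
  have "rho_negligible \<rho> (\<lambda>\<epsilon>. zh \<epsilon> - Z \<epsilon>)"
  proof (rule negl_le[OF gauge nVW], rule always_eventually, rule allI)
    fix \<epsilon>
    have "zh \<epsilon> - Z \<epsilon> = pt \<epsilon> - W \<epsilon>" by (simp add: zh_def W_def)
    also have "norm \<dots> \<le> norm (V \<epsilon> - W \<epsilon>)" by (rule segment_bound1[OF pt_seg])
    finally show "norm (zh \<epsilon> - Z \<epsilon>) \<le> norm (V \<epsilon> - W \<epsilon>)" .
  qed
  hence zhZ: "rho_eq \<rho> zh Z" by (simp add: rho_eq_def)
  have "rho_moderate \<rho> (\<lambda>\<epsilon>. \<Sum>n. of_nat (Suc n) * A (Suc n) \<epsilon> * (zh \<epsilon> - C \<epsilon>) ^ n)"
    using cc zhZ unfolding cond_c_def by blast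
  moreover have "(\<lambda>\<epsilon>. \<Sum>n. of_nat (Suc n) * A (Suc n) \<epsilon> * (zh \<epsilon> - C \<epsilon>) ^ n)
      = (\<lambda>\<epsilon>. \<Sum>n. diffs (\<lambda>n. A n \<epsilon>) n * pt \<epsilon> ^ n)"
    by (simp add: zh_def diffs_def)
  ultimately have "rho_moderate \<rho> (\<lambda>\<epsilon>. \<Sum>n. diffs (\<lambda>n. A n \<epsilon>) n * pt \<epsilon> ^ n)" by simp
  then obtain N1 where N1: "\<forall>\<^sub>F \<epsilon> in at_right 0. norm (\<Sum>n. diffs (\<lambda>n. A n \<epsilon>) n * pt \<epsilon> ^ n) \<le> inverse (\<rho> \<epsilon> ^ N1)"
    unfolding rho_moderate_def by blast
  show ?thesis unfolding rho_negligible_def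
  proof
    fix q
    have d: "\<forall>\<^sub>F \<epsilon> in at_right 0. norm (V \<epsilon> - W \<epsilon>) \<le> \<rho> \<epsilon> ^ (q+N1+m+1)"
      using nVW unfolding rho_negligible_def by blast
    from d N1 rad ev_rho[OF gauge]
    show "\<forall>\<^sub>F \<epsilon> in at_right 0. norm ((\<Sum>n. A n \<epsilon> * V \<epsilon> ^ n) - (\<Sum>n. A n \<epsilon> * (Z \<epsilon> - C \<epsilon>) ^ n)) \<le> \<rho> \<epsilon> ^ q"
    proof eventually_elim
      case (elim \<epsilon>)
      have r: "0 < \<rho> \<epsilon>" "\<rho> \<epsilon> \<le> 1/2" using elim by auto
      define K where "K = norm (W \<epsilon>) + \<rho> \<epsilon> ^ m"
      have RK: "ereal K \<le> conv_radius (\<lambda>n. A n \<epsilon>)" using elim by (simp add: K_def W_def)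
      have dm: "norm (V \<epsilon> - W \<epsilon>) < \<rho> \<epsilon> ^ m"
      proof -
        have "\<rho> \<epsilon> ^ (q+N1+m+1) \<le> \<rho> \<epsilon> ^ (m+1)" using r by (intro power_decreasing) auto
        also have "\<dots> < \<rho> \<epsilon> ^ m" using r by simp
        finally show ?thesis using elim by linarith
      qed
      have S: "norm y < K" if "y \<in> closed_segment (W \<epsilon>) (V \<epsilon>)" for y
      proof -
        have "norm y \<le> norm (W \<epsilon>) + norm (y - W \<epsilon>)" using norm_triangle_ineq2[of y "W \<epsilon>"] by simp
        also have "norm (y - W \<epsilon>) \<le> norm (V \<epsilon> - W \<epsilon>)" by (rule segment_bound1[OF that])
        finally show ?thesis using dm by (simp add: K_def)
      qed
      have "\<exists>p. Qp \<epsilon> p" using PA[OF RK S] unfolding Qp_def by blast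
      hence Q: "Qp \<epsilon> (pt \<epsilon>)" by (rule ptQ)
      have "norm ((\<Sum>n. A n \<epsilon> * V \<epsilon> ^ n) - (\<Sum>n. A n \<epsilon> * W \<epsilon> ^ n))
            \<le> norm (\<Sum>n. diffs (\<lambda>n. A n \<epsilon>) n * pt \<epsilon> ^ n) * norm (V \<epsilon> - W \<epsilon>)"
        using Q by (simp add: Qp_def)
      also have "\<dots> \<le> inverse (\<rho> \<epsilon> ^ N1) * \<rho> \<epsilon> ^ (q+N1+m+1)"
        using elim r by (intro mult_mono) auto
      also have "\<dots> = \<rho> \<epsilon> ^ q * \<rho> \<epsilon> ^ (m+1)" using r by (simp add: power_add field_simps)
      also have "\<dots> \<le> \<rho> \<epsilon> ^ q * 1" using r by (intro mult_left_mono power_le_one) auto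
      finally show ?case by (simp add: W_def)
    qed
  qed
qed

end

lemma suc_pow_le: "0 \<le> (r::real) \<Longrightarrow> r \<le> 1/2 \<Longrightarrow> real (Suc n) * r ^ n \<le> 1"
proof -
  assume r: "0 \<le> r" "r \<le> 1/2"
  have "real (Suc n) \<le> 2 ^ n"
  proof -
    have "Suc n \<le> 2 ^ n" using less_exp[of n] by (cases n) auto
    thus ?thesis by (metis of_nat_le_iff of_nat_numeral of_nat_power)
  qed
  hence "real (Suc n) * r ^ n \<le> 2 ^ n * r ^ n" using r by (intro mult_right_mono) auto
  also have "\<dots> = (2 * r) ^ n" by (simp add: power_mult_distrib)
  also have "\<dots> \<le> 1" using r by (intro power_le_one) auto
  finally show ?thesis .
qed

context
  fixes \<rho> :: "real \<Rightarrow> real"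
  assumes gauge: "rho_gauge \<rho>"
begin

lemma DSE:
  fixes A B :: "nat \<Rightarrow> real \<Rightarrow> complex" and u :: "real \<Rightarrow> complex"
  assumes se: "strong_eq \<rho> A B" and um: "rho_moderate \<rho> u"
  shows "\<forall>\<^sub>F \<epsilon> in at_right 0. \<forall>n. norm (of_nat (Suc n) * (A (Suc n) \<epsilon> - B (Suc n) \<epsilon>) * u \<epsilon> ^ n) \<le> \<rho> \<epsilon> ^ r * \<rho> \<epsilon> ^ n"
proof -
  define u' where "u' = (\<lambda>\<epsilon>. max 1 (norm (u \<epsilon>)))"
  have "rho_moderate \<rho> (\<lambda>\<epsilon>. 1 + norm (u \<epsilon>))"
    by (rule mod_add[OF gauge]) (use um in \<open>auto simp: rho_moderate_def intro!: exI[of _ 0]\<close>)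
  hence um': "rho_moderate \<rho> u'"
    by (rule mod_le[OF gauge]) (auto simp: u'_def)
  from SE[OF gauge se um', of 2 r] ev_rho[OF gauge]
  show ?thesis
  proof eventually_elim
    case (elim \<epsilon>)
    have r: "0 < \<rho> \<epsilon>" "\<rho> \<epsilon> \<le> 1/2" using elim by auto
    show ?case
    proof
      fix n
      have u1: "1 \<le> u' \<epsilon>" "norm (u \<epsilon>) \<le> u' \<epsilon>" by (auto simp: u'_def)
      have "norm (u \<epsilon>) ^ n \<le> u' \<epsilon> ^ n" using u1 by (intro power_mono) auto
      also have "\<dots> \<le> u' \<epsilon> ^ Suc n" using u1 by (intro power_increasing) auto
      finally have un: "norm (u \<epsilon>) ^ n \<le> \<bar>u' \<epsilon>\<bar> ^ Suc n" using u1 by simp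
      have "norm (of_nat (Suc n) * (A (Suc n) \<epsilon> - B (Suc n) \<epsilon>) * u \<epsilon> ^ n)
          = real (Suc n) * (cmod (A (Suc n) \<epsilon> - B (Suc n) \<epsilon>) * norm (u \<epsilon>) ^ n)"
        by (simp only: norm_mult norm_power norm_of_nat mult.assoc)
      also have "\<dots> \<le> real (Suc n) * (cmod (A (Suc n) \<epsilon> - B (Suc n) \<epsilon>) * \<bar>u' \<epsilon>\<bar> ^ Suc n)"
        using un by (intro mult_left_mono) auto
      also have "\<dots> \<le> real (Suc n) * \<rho> \<epsilon> ^ (Suc n * 2 + r)"
        by (rule mult_left_mono[OF elim(1)[rule_format, of "Suc n"]]) simp
      also have "\<dots> = (real (Suc n) * \<rho> \<epsilon> ^ n) * (\<rho> \<epsilon> ^ 2 * (\<rho> \<epsilon> ^ r * \<rho> \<epsilon> ^ n))"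
        by (simp add: power_add power_mult field_simps power2_eq_square)
      also have "\<dots> \<le> 1 * (1 * (\<rho> \<epsilon> ^ r * \<rho> \<epsilon> ^ n))"
        using r suc_pow_le[of "\<rho> \<epsilon>" n]
        by (intro mult_mono) (auto simp: power_le_one)
      finally show "norm (of_nat (Suc n) * (A (Suc n) \<epsilon> - B (Suc n) \<epsilon>) * u \<epsilon> ^ n) \<le> \<rho> \<epsilon> ^ r * \<rho> \<epsilon> ^ n" by simp
    qed
  qed
qed

lemma GLnet:
  fixes t :: "nat \<Rightarrow> real \<Rightarrow> complex"
  assumes "\<And>r. \<forall>\<^sub>F \<epsilon> in at_right 0. \<forall>n. norm (t n \<epsilon>) \<le> \<rho> \<epsilon> ^ r * \<rho> \<epsilon> ^ n"
  shows "\<forall>\<^sub>F \<epsilon> in at_right 0. summable (\<lambda>n. t n \<epsilon>)"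
    and "rho_negligible \<rho> (\<lambda>\<epsilon>. \<Sum>n. t n \<epsilon>)"
proof -
  show "\<forall>\<^sub>F \<epsilon> in at_right 0. summable (\<lambda>n. t n \<epsilon>)"
    using assms[of 0] ev_rho[OF gauge]
    by eventually_elim (rule GL(1)[of "\<rho> _" _ 1], auto)
  show "rho_negligible \<rho> (\<lambda>\<epsilon>. \<Sum>n. t n \<epsilon>)" unfolding rho_negligible_def
  proof
    fix q
    from assms[of "Suc q"] ev_rho[OF gauge]
    show "\<forall>\<^sub>F \<epsilon> in at_right 0. norm (\<Sum>n. t n \<epsilon>) \<le> \<rho> \<epsilon> ^ q"
    proof eventually_elim
      case (elim \<epsilon>)
      have "norm (\<Sum>n. t n \<epsilon>) \<le> 2 * \<rho> \<epsilon> ^ Suc q"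
        by (rule GL(2)[of "\<rho> \<epsilon>"]) (use elim in auto)
      also have "\<dots> = (2 * \<rho> \<epsilon>) * \<rho> \<epsilon> ^ q" by simp
      also have "\<dots> \<le> 1 * \<rho> \<epsilon> ^ q" using elim by (intro mult_right_mono) auto
      finally show ?case by simp
    qed
  qed
qed

lemma strong_eq_sym: "strong_eq \<rho> A B \<Longrightarrow> strong_eq \<rho> B A"
  unfolding strong_eq_def by (simp add: norm_minus_commute)

lemma strong_eq_trans:
  assumes "strong_eq \<rho> A B" "strong_eq \<rho> B C"
  shows "strong_eq \<rho> A C"
  unfolding strong_eq_def
proof (intro allI)
  fix q r
  from assms(1)[unfolded strong_eq_def, rule_format, of q "Suc r"]
       assms(2)[unfolded strong_eq_def, rule_format, of q "Suc r"] ev_rho[OF gauge]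
  show "\<forall>\<^sub>F \<epsilon> in at_right 0. \<forall>n. cmod (A n \<epsilon> - C n \<epsilon>) \<le> \<rho> \<epsilon> ^ (n * q + r)"
  proof eventually_elim
    case (elim \<epsilon>)
    show ?case
    proof
      fix n
      have "cmod (A n \<epsilon> - C n \<epsilon>) \<le> cmod (A n \<epsilon> - B n \<epsilon>) + cmod (B n \<epsilon> - C n \<epsilon>)"
        using norm_triangle_ineq[of "A n \<epsilon> - B n \<epsilon>" "B n \<epsilon> - C n \<epsilon>"] by simp
      also have "\<dots> \<le> 2 * \<rho> \<epsilon> ^ (n * q + Suc r)" using elim by (smt (verit))
      also have "\<dots> = (2 * \<rho> \<epsilon>) * \<rho> \<epsilon> ^ (n * q + r)" by simp
      also have "\<dots> \<le> 1 * \<rho> \<epsilon> ^ (n * q + r)" using elim by (intro mult_right_mono) auto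
      finally show "cmod (A n \<epsilon> - C n \<epsilon>) \<le> \<rho> \<epsilon> ^ (n * q + r)" by simp
    qed
  qed
qed

lemma negl_norm: "rho_negligible \<rho> x \<Longrightarrow> rho_negligible \<rho> (\<lambda>\<epsilon>. norm (x \<epsilon>))"
  by (simp add: rho_negligible_def)

lemma interval_sum_bound:
  fixes f :: "nat \<Rightarrow> 'a::real_normed_vector"
  shows "norm (\<Sum>n\<in>{a..b}. f n) \<le> norm (\<Sum>n<Suc b. f n) + norm (\<Sum>n<a. f n)"
proof (cases "a \<le> b")
  case True
  have "(\<Sum>n\<in>{a..b}. f n) = (\<Sum>n<Suc b. f n) - (\<Sum>n<a. f n)"
  proof -
    have u: "{..<Suc b} = {..<a} \<union> {a..b}" using True by auto
    have "(\<Sum>n<Suc b. f n) = (\<Sum>n<a. f n) + (\<Sum>n\<in>{a..b}. f n)"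
      unfolding u by (rule sum.union_disjoint) auto
    thus ?thesis by (simp add: algebra_simps)
  qed
  thus ?thesis by (simp add: norm_triangle_ineq4)
next
  case False thus ?thesis by simp
qed

end

context
  fixes \<rho> :: "real \<Rightarrow> real"
    and ni :: "(real \<Rightarrow> nat) \<Rightarrow> (real \<Rightarrow> nat)"
    and A B :: "nat \<Rightarrow> real \<Rightarrow> complex"
    and Z C Y D :: "real \<Rightarrow> complex"
    and m :: nat
  assumes gauge: "rho_gauge \<rho>"
    and ni: "ni_choice \<rho> ni"
    and wm: "weakly_moderate \<rho> A"
    and se: "strong_eq \<rho> A B"
    and Zm: "rho_moderate \<rho> Z" and Cm: "rho_moderate \<rho> C"
    and Ym: "rho_moderate \<rho> Y" and Dm: "rho_moderate \<rho> D"
    and YZ: "rho_eq \<rho> Y Z" and DC: "rho_eq \<rho> D C"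
    and cds: "conds_abc \<rho> ni A Z C"
    and radA: "\<forall>\<^sub>F \<epsilon> in at_right 0. ereal (norm (Z \<epsilon> - C \<epsilon>) + \<rho> \<epsilon> ^ m) \<le> conv_radius (\<lambda>n. A n \<epsilon>)"
    and radB: "\<forall>\<^sub>F \<epsilon> in at_right 0. ereal (norm (Y \<epsilon> - D \<epsilon>)) < conv_radius (\<lambda>n. B n \<epsilon>)"
begin

lemma VW: "rho_eq \<rho> (\<lambda>\<epsilon>. Y \<epsilon> - D \<epsilon>) (\<lambda>\<epsilon>. Z \<epsilon> - C \<epsilon>)"
proof -
  have "rho_negligible \<rho> (\<lambda>\<epsilon>. (Y \<epsilon> - Z \<epsilon>) - (D \<epsilon> - C \<epsilon>))"
    using negl_diff[OF gauge] YZ DC by (simp add: rho_eq_def)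
  thus ?thesis by (simp add: rho_eq_def algebra_simps)
qed

lemma Vm: "rho_moderate \<rho> (\<lambda>\<epsilon>. Y \<epsilon> - D \<epsilon>)"
  by (rule mod_diff[OF gauge Ym Dm])

lemma mhA: "moderate_over_hypersums \<rho> ni (\<lambda>n \<epsilon>. A n \<epsilon> * (Z \<epsilon> - C \<epsilon>) ^ n)"
  using cds by (simp add: conds_abc_def cond_a_def)

lemma Dnegl:
  assumes K: "hypernat \<rho> K"
  shows "rho_negligible \<rho> (\<lambda>\<epsilon>. \<Sum>n<K \<epsilon>. A n \<epsilon> * (Z \<epsilon> - C \<epsilon>) ^ n - B n \<epsilon> * (Y \<epsilon> - D \<epsilon>) ^ n)"
  by (rule KL[OF gauge ni mhA wm rho_eq_sym[OF gauge VW] se Vm K])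

lemma T_a: "cond_a \<rho> ni B Y D"
  unfolding cond_a_def moderate_over_hypersums_def
proof (intro allI impI)
  fix N assume N: "hypernat \<rho> N"
  have K: "hypernat \<rho> (\<lambda>\<epsilon>. Suc (ni N \<epsilon>))" by (rule hyp_Suc[OF gauge hyp_ni(1)[OF gauge ni N]])
  have m1: "rho_moderate \<rho> (hypersum ni (\<lambda>n \<epsilon>. A n \<epsilon> * (Z \<epsilon> - C \<epsilon>) ^ n) N)"
    using mhA N by (simp add: moderate_over_hypersums_def)
  have "rho_moderate \<rho> (\<lambda>\<epsilon>. hypersum ni (\<lambda>n \<epsilon>. A n \<epsilon> * (Z \<epsilon> - C \<epsilon>) ^ n) N \<epsilon> -
      (\<Sum>n<Suc (ni N \<epsilon>). A n \<epsilon> * (Z \<epsilon> - C \<epsilon>) ^ n - B n \<epsilon> * (Y \<epsilon> - D \<epsilon>) ^ n))"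
    by (rule mod_diff[OF gauge m1 negl_mod[OF gauge Dnegl[OF K]]])
  moreover have "(\<lambda>\<epsilon>. hypersum ni (\<lambda>n \<epsilon>. A n \<epsilon> * (Z \<epsilon> - C \<epsilon>) ^ n) N \<epsilon> -
      (\<Sum>n<Suc (ni N \<epsilon>). A n \<epsilon> * (Z \<epsilon> - C \<epsilon>) ^ n - B n \<epsilon> * (Y \<epsilon> - D \<epsilon>) ^ n))
      = hypersum ni (\<lambda>n \<epsilon>. B n \<epsilon> * (Y \<epsilon> - D \<epsilon>) ^ n) N"
    by (rule ext) (simp add: hypersum_def sum_subtractf lessThan_Suc_atMost)
  ultimately show "rho_moderate \<rho> (hypersum ni (\<lambda>n \<epsilon>. B n \<epsilon> * (Y \<epsilon> - D \<epsilon>) ^ n) N)" by simp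
qed

lemma T_hs: "hs_eq \<rho> ni (\<lambda>n \<epsilon>. A n \<epsilon> * (Z \<epsilon> - C \<epsilon>) ^ n) (\<lambda>n \<epsilon>. B n \<epsilon> * (Y \<epsilon> - D \<epsilon>) ^ n)"
  unfolding hs_eq_def
proof (intro allI impI)
  fix N M assume N: "hypernat \<rho> N" and M: "hypernat \<rho> M"
  define f where "f = (\<lambda>n \<epsilon>. A n \<epsilon> * (Z \<epsilon> - C \<epsilon>) ^ n - B n \<epsilon> * (Y \<epsilon> - D \<epsilon>) ^ n)"
  have K1: "hypernat \<rho> (\<lambda>\<epsilon>. Suc (ni M \<epsilon>))" by (rule hyp_Suc[OF gauge hyp_ni(1)[OF gauge ni M]])
  have K2: "hypernat \<rho> (ni N)" by (rule hyp_ni(1)[OF gauge ni N])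
  have n1: "rho_negligible \<rho> (\<lambda>\<epsilon>. norm (\<Sum>n<Suc (ni M \<epsilon>). f n \<epsilon>))"
    using negl_norm[OF gauge Dnegl[OF K1]] by (simp add: f_def)
  have n2: "rho_negligible \<rho> (\<lambda>\<epsilon>. norm (\<Sum>n<ni N \<epsilon>. f n \<epsilon>))"
    using negl_norm[OF gauge Dnegl[OF K2]] by (simp add: f_def)
  have "rho_negligible \<rho> (\<lambda>\<epsilon>. \<Sum>n\<in>{ni N \<epsilon>..ni M \<epsilon>}. f n \<epsilon>)"
    by (rule negl_le_real[OF gauge negl_add[OF gauge n1 n2]], rule always_eventually, rule allI, rule interval_sum_bound[OF gauge])
  thus "rho_negligible \<rho> (\<lambda>\<epsilon>. \<Sum>n\<in>{ni N \<epsilon>..ni M \<epsilon>}. A n \<epsilon> * (Z \<epsilon> - C \<epsilon>) ^ n - B n \<epsilon> * (Y \<epsilon> - D \<epsilon>) ^ n)"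
    by (simp add: f_def)
qed


lemma T_c: "cond_c \<rho> B Y D"
  unfolding cond_c_def
proof (intro allI impI conjI)
  fix zh assume zY: "rho_eq \<rho> zh Y"
  define zh' where "zh' = (\<lambda>\<epsilon>. zh \<epsilon> - D \<epsilon> + C \<epsilon>)"
  have a: "rho_negligible \<rho> (\<lambda>\<epsilon>. (zh \<epsilon> - Y \<epsilon>) + (Y \<epsilon> - Z \<epsilon>))"
    by (rule negl_add[OF gauge]) (use zY YZ in \<open>simp_all add: rho_eq_def\<close>)
  have "rho_negligible \<rho> (\<lambda>\<epsilon>. ((zh \<epsilon> - Y \<epsilon>) + (Y \<epsilon> - Z \<epsilon>)) - (D \<epsilon> - C \<epsilon>))"
    by (rule negl_diff[OF gauge a]) (use DC in \<open>simp add: rho_eq_def\<close>)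
  hence z'Z: "rho_eq \<rho> zh' Z" by (simp add: rho_eq_def zh'_def algebra_simps)
  have ccA: "cond_c \<rho> A Z C" using cds by (simp add: conds_abc_def)
  have cA: "(\<forall>\<^sub>F \<epsilon> in at_right 0. summable (\<lambda>n. of_nat (Suc n) * A (Suc n) \<epsilon> * (zh' \<epsilon> - C \<epsilon>) ^ n)) \<and>
     rho_moderate \<rho> (\<lambda>\<epsilon>. \<Sum>n. of_nat (Suc n) * A (Suc n) \<epsilon> * (zh' \<epsilon> - C \<epsilon>) ^ n)"
    using ccA z'Z unfolding cond_c_def by blast
  have e: "\<And>\<epsilon>. zh' \<epsilon> - C \<epsilon> = zh \<epsilon> - D \<epsilon>" by (simp add: zh'_def)
  have sA: "\<forall>\<^sub>F \<epsilon> in at_right 0. summable (\<lambda>n. of_nat (Suc n) * A (Suc n) \<epsilon> * (zh \<epsilon> - D \<epsilon>) ^ n)"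
   and mA: "rho_moderate \<rho> (\<lambda>\<epsilon>. \<Sum>n. of_nat (Suc n) * A (Suc n) \<epsilon> * (zh \<epsilon> - D \<epsilon>) ^ n)"
    using cA[unfolded e] by blast+
  have um: "rho_moderate \<rho> (\<lambda>\<epsilon>. zh \<epsilon> - D \<epsilon>)"
    by (rule mod_diff[OF gauge mod_eq[OF gauge Ym zY] Dm])
  have bnd: "\<And>r. \<forall>\<^sub>F \<epsilon> in at_right 0. \<forall>n. norm (of_nat (Suc n) * (B (Suc n) \<epsilon> - A (Suc n) \<epsilon>) * (zh \<epsilon> - D \<epsilon>) ^ n) \<le> \<rho> \<epsilon> ^ r * \<rho> \<epsilon> ^ n"
    by (rule DSE[OF gauge strong_eq_sym[OF gauge se] um])
  note sd = GLnet(1)[OF gauge bnd] and nd = GLnet(2)[OF gauge bnd]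
  have split: "of_nat (Suc n) * B (Suc n) \<epsilon> * (zh \<epsilon> - D \<epsilon>) ^ n =
      of_nat (Suc n) * A (Suc n) \<epsilon> * (zh \<epsilon> - D \<epsilon>) ^ n + of_nat (Suc n) * (B (Suc n) \<epsilon> - A (Suc n) \<epsilon>) * (zh \<epsilon> - D \<epsilon>) ^ n" for n \<epsilon>
    by (simp add: algebra_simps)
  show "\<forall>\<^sub>F \<epsilon> in at_right 0. summable (\<lambda>n. of_nat (Suc n) * B (Suc n) \<epsilon> * (zh \<epsilon> - D \<epsilon>) ^ n)"
    using sA sd by eventually_elim (unfold split, rule summable_add)
  have "rho_moderate \<rho> (\<lambda>\<epsilon>. (\<Sum>n. of_nat (Suc n) * A (Suc n) \<epsilon> * (zh \<epsilon> - D \<epsilon>) ^ n) +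
          (\<Sum>n. of_nat (Suc n) * (B (Suc n) \<epsilon> - A (Suc n) \<epsilon>) * (zh \<epsilon> - D \<epsilon>) ^ n))"
    by (rule mod_add[OF gauge mA negl_mod[OF gauge nd]])
  thus "rho_moderate \<rho> (\<lambda>\<epsilon>. \<Sum>n. of_nat (Suc n) * B (Suc n) \<epsilon> * (zh \<epsilon> - D \<epsilon>) ^ n)"
  proof (rule mod_cong[OF gauge])
    show "\<forall>\<^sub>F \<epsilon> in at_right 0. (\<Sum>n. of_nat (Suc n) * B (Suc n) \<epsilon> * (zh \<epsilon> - D \<epsilon>) ^ n) =
        (\<Sum>n. of_nat (Suc n) * A (Suc n) \<epsilon> * (zh \<epsilon> - D \<epsilon>) ^ n) +
        (\<Sum>n. of_nat (Suc n) * (B (Suc n) \<epsilon> - A (Suc n) \<epsilon>) * (zh \<epsilon> - D \<epsilon>) ^ n)"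
      using sA sd by eventually_elim (unfold split, rule suminf_add[symmetric])
  qed
qed

lemma FD: "rho_negligible \<rho> (\<lambda>\<epsilon>. (\<Sum>n. B n \<epsilon> * (Y \<epsilon> - D \<epsilon>) ^ n) - (\<Sum>n. A n \<epsilon> * (Z \<epsilon> - C \<epsilon>) ^ n))"
proof -
  have um: "rho_moderate \<rho> (\<lambda>\<epsilon>. norm (Y \<epsilon> - D \<epsilon>))" using Vm by (simp add: rho_moderate_def)
  have bnd: "\<forall>\<^sub>F \<epsilon> in at_right 0. \<forall>n. norm ((B n \<epsilon> - A n \<epsilon>) * (Y \<epsilon> - D \<epsilon>) ^ n) \<le> \<rho> \<epsilon> ^ r * \<rho> \<epsilon> ^ n" for r
    using SE[OF gauge strong_eq_sym[OF gauge se] um, of 1 r]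
    by eventually_elim (simp add: norm_mult norm_power power_add mult.commute)
  note n1 = GLnet(2)[OF gauge bnd]
  have n2: "rho_negligible \<rho> (\<lambda>\<epsilon>. (\<Sum>n. A n \<epsilon> * (Y \<epsilon> - D \<epsilon>) ^ n) - (\<Sum>n. A n \<epsilon> * (Z \<epsilon> - C \<epsilon>) ^ n))"
    by (rule MV[OF gauge _ radA VW]) (use cds in \<open>simp add: conds_abc_def\<close>)
  have sA: "\<forall>\<^sub>F \<epsilon> in at_right 0. summable (\<lambda>n. A n \<epsilon> * (Y \<epsilon> - D \<epsilon>) ^ n)"
  proof -
    have d: "\<forall>\<^sub>F \<epsilon> in at_right 0. norm ((Y \<epsilon> - D \<epsilon>) - (Z \<epsilon> - C \<epsilon>)) \<le> \<rho> \<epsilon> ^ Suc m"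
      using VW unfolding rho_eq_def rho_negligible_def by blast
    from d radA ev_rho[OF gauge] show ?thesis
    proof eventually_elim
      case (elim \<epsilon>)
      have "norm (Y \<epsilon> - D \<epsilon>) \<le> norm (Z \<epsilon> - C \<epsilon>) + norm ((Y \<epsilon> - D \<epsilon>) - (Z \<epsilon> - C \<epsilon>))"
        using norm_triangle_ineq2[of "Y \<epsilon> - D \<epsilon>" "Z \<epsilon> - C \<epsilon>"] by simp
      also have "\<dots> < norm (Z \<epsilon> - C \<epsilon>) + \<rho> \<epsilon> ^ m"
      proof -
        have "\<rho> \<epsilon> ^ Suc m < \<rho> \<epsilon> ^ m" using elim by simp
        thus ?thesis using elim by linarith
      qed
      finally have "ereal (norm (Y \<epsilon> - D \<epsilon>)) < ereal (norm (Z \<epsilon> - C \<epsilon>) + \<rho> \<epsilon> ^ m)" by simp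
      also have "\<dots> \<le> conv_radius (\<lambda>n. A n \<epsilon>)" using elim by simp
      finally show ?case by (rule summable_in_conv_radius)
    qed
  qed
  have sB: "\<forall>\<^sub>F \<epsilon> in at_right 0. summable (\<lambda>n. B n \<epsilon> * (Y \<epsilon> - D \<epsilon>) ^ n)"
    using radB by eventually_elim (rule summable_in_conv_radius)
  have "rho_negligible \<rho> (\<lambda>\<epsilon>. (\<Sum>n. (B n \<epsilon> - A n \<epsilon>) * (Y \<epsilon> - D \<epsilon>) ^ n) +
      ((\<Sum>n. A n \<epsilon> * (Y \<epsilon> - D \<epsilon>) ^ n) - (\<Sum>n. A n \<epsilon> * (Z \<epsilon> - C \<epsilon>) ^ n)))"
    by (rule negl_add[OF gauge n1 n2])
  thus ?thesis
  proof (rule negl_cong[OF gauge])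
    show "\<forall>\<^sub>F \<epsilon> in at_right 0. (\<Sum>n. B n \<epsilon> * (Y \<epsilon> - D \<epsilon>) ^ n) - (\<Sum>n. A n \<epsilon> * (Z \<epsilon> - C \<epsilon>) ^ n) =
      (\<Sum>n. (B n \<epsilon> - A n \<epsilon>) * (Y \<epsilon> - D \<epsilon>) ^ n) +
      ((\<Sum>n. A n \<epsilon> * (Y \<epsilon> - D \<epsilon>) ^ n) - (\<Sum>n. A n \<epsilon> * (Z \<epsilon> - C \<epsilon>) ^ n))"
      using sA sB
    proof eventually_elim
      case (elim \<epsilon>)
      have "(\<Sum>n. (B n \<epsilon> - A n \<epsilon>) * (Y \<epsilon> - D \<epsilon>) ^ n) = (\<Sum>n. B n \<epsilon> * (Y \<epsilon> - D \<epsilon>) ^ n - A n \<epsilon> * (Y \<epsilon> - D \<epsilon>) ^ n)"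
        by (simp add: algebra_simps)
      also have "\<dots> = (\<Sum>n. B n \<epsilon> * (Y \<epsilon> - D \<epsilon>) ^ n) - (\<Sum>n. A n \<epsilon> * (Y \<epsilon> - D \<epsilon>) ^ n)"
        by (rule sym, rule suminf_diff[OF elim(2) elim(1)])
      finally show ?case by simp
    qed
  qed
qed



lemma T_b: "cond_b \<rho> ni B Y D"
  unfolding cond_b_def
proof (intro conjI)
  show "\<forall>\<^sub>F \<epsilon> in at_right 0. summable (\<lambda>n. B n \<epsilon> * (Y \<epsilon> - D \<epsilon>) ^ n)"
    using radB by eventually_elim (rule summable_in_conv_radius)
  have cbA: "cond_b \<rho> ni A Z C" using cds by (simp add: conds_abc_def)
  have mA: "rho_moderate \<rho> (\<lambda>\<epsilon>. \<Sum>n. A n \<epsilon> * (Z \<epsilon> - C \<epsilon>) ^ n)" using cbA by (simp add: cond_b_def)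
  have "rho_moderate \<rho> (\<lambda>\<epsilon>. (\<Sum>n. A n \<epsilon> * (Z \<epsilon> - C \<epsilon>) ^ n) +
     ((\<Sum>n. B n \<epsilon> * (Y \<epsilon> - D \<epsilon>) ^ n) - (\<Sum>n. A n \<epsilon> * (Z \<epsilon> - C \<epsilon>) ^ n)))"
    by (rule mod_add[OF gauge mA negl_mod[OF gauge FD]])
  thus "rho_moderate \<rho> (\<lambda>\<epsilon>. \<Sum>n. B n \<epsilon> * (Y \<epsilon> - D \<epsilon>) ^ n)" by simp
  have hlA: "hyperlim \<rho> (hypersum ni (\<lambda>n \<epsilon>. A n \<epsilon> * (Z \<epsilon> - C \<epsilon>) ^ n)) (\<lambda>\<epsilon>. \<Sum>n. A n \<epsilon> * (Z \<epsilon> - C \<epsilon>) ^ n)"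
    using cbA by (simp add: cond_b_def)
  show "hyperlim \<rho> (hypersum ni (\<lambda>n \<epsilon>. B n \<epsilon> * (Y \<epsilon> - D \<epsilon>) ^ n)) (\<lambda>\<epsilon>. \<Sum>n. B n \<epsilon> * (Y \<epsilon> - D \<epsilon>) ^ n)"
    unfolding hyperlim_def
  proof
    fix q
    obtain M where M: "hypernat \<rho> M" and HM: "\<And>n. hypernat \<rho> n \<Longrightarrow> rt_le \<rho> (\<lambda>\<epsilon>. real (M \<epsilon>)) (\<lambda>\<epsilon>. real (n \<epsilon>)) \<Longrightarrow>
        rt_lt \<rho> (\<lambda>\<epsilon>. cmod (hypersum ni (\<lambda>n \<epsilon>. A n \<epsilon> * (Z \<epsilon> - C \<epsilon>) ^ n) n \<epsilon> - (\<Sum>k. A k \<epsilon> * (Z \<epsilon> - C \<epsilon>) ^ k))) (\<lambda>\<epsilon>. \<rho> \<epsilon> ^ q)"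
      using hlA[unfolded hyperlim_def, rule_format, of q] by blast
    show "\<exists>M. hypernat \<rho> M \<and> (\<forall>n. hypernat \<rho> n \<longrightarrow> rt_le \<rho> (\<lambda>\<epsilon>. real (M \<epsilon>)) (\<lambda>\<epsilon>. real (n \<epsilon>)) \<longrightarrow>
        rt_lt \<rho> (\<lambda>\<epsilon>. cmod (hypersum ni (\<lambda>n \<epsilon>. B n \<epsilon> * (Y \<epsilon> - D \<epsilon>) ^ n) n \<epsilon> - (\<Sum>k. B k \<epsilon> * (Y \<epsilon> - D \<epsilon>) ^ k))) (\<lambda>\<epsilon>. \<rho> \<epsilon> ^ q))"
    proof (intro exI conjI allI impI)
      show "hypernat \<rho> M" by (rule M)
      fix n assume hn: "hypernat \<rho> n" and le: "rt_le \<rho> (\<lambda>\<epsilon>. real (M \<epsilon>)) (\<lambda>\<epsilon>. real (n \<epsilon>))"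
      obtain m' where m': "\<forall>\<^sub>F \<epsilon> in at_right 0. \<rho> \<epsilon> ^ q - cmod (hypersum ni (\<lambda>n \<epsilon>. A n \<epsilon> * (Z \<epsilon> - C \<epsilon>) ^ n) n \<epsilon> - (\<Sum>k. A k \<epsilon> * (Z \<epsilon> - C \<epsilon>) ^ k)) > \<rho> \<epsilon> ^ m'"
        using HM[OF hn le] by (auto simp: rt_lt_def)
      have K: "hypernat \<rho> (\<lambda>\<epsilon>. Suc (ni n \<epsilon>))" by (rule hyp_Suc[OF gauge hyp_ni(1)[OF gauge ni hn]])
      have d1: "\<forall>\<^sub>F \<epsilon> in at_right 0. norm (\<Sum>k<Suc (ni n \<epsilon>). A k \<epsilon> * (Z \<epsilon> - C \<epsilon>) ^ k - B k \<epsilon> * (Y \<epsilon> - D \<epsilon>) ^ k) \<le> \<rho> \<epsilon> ^ (m'+2)"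
        using Dnegl[OF K] unfolding rho_negligible_def by blast
      have d2: "\<forall>\<^sub>F \<epsilon> in at_right 0. norm ((\<Sum>k. B k \<epsilon> * (Y \<epsilon> - D \<epsilon>) ^ k) - (\<Sum>k. A k \<epsilon> * (Z \<epsilon> - C \<epsilon>) ^ k)) \<le> \<rho> \<epsilon> ^ (m'+2)"
        using FD unfolding rho_negligible_def by blast
      have "\<forall>\<^sub>F \<epsilon> in at_right 0. \<rho> \<epsilon> ^ q - cmod (hypersum ni (\<lambda>n \<epsilon>. B n \<epsilon> * (Y \<epsilon> - D \<epsilon>) ^ n) n \<epsilon> - (\<Sum>k. B k \<epsilon> * (Y \<epsilon> - D \<epsilon>) ^ k)) > \<rho> \<epsilon> ^ (m'+1)"
        using m' d1 d2 ev_rho[OF gauge]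
      proof eventually_elim
        case (elim \<epsilon>)
        define SA where "SA = hypersum ni (\<lambda>n \<epsilon>. A n \<epsilon> * (Z \<epsilon> - C \<epsilon>) ^ n) n \<epsilon>"
        define SB where "SB = hypersum ni (\<lambda>n \<epsilon>. B n \<epsilon> * (Y \<epsilon> - D \<epsilon>) ^ n) n \<epsilon>"
        define fA where "fA = (\<Sum>k. A k \<epsilon> * (Z \<epsilon> - C \<epsilon>) ^ k)"
        define fB where "fB = (\<Sum>k. B k \<epsilon> * (Y \<epsilon> - D \<epsilon>) ^ k)"
        define DD where "DD = (\<Sum>k<Suc (ni n \<epsilon>). A k \<epsilon> * (Z \<epsilon> - C \<epsilon>) ^ k - B k \<epsilon> * (Y \<epsilon> - D \<epsilon>) ^ k)"
        have eSB: "SB = SA - DD"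
          by (simp add: SA_def SB_def DD_def hypersum_def sum_subtractf lessThan_Suc_atMost)
        have "SB - fB = (SA - fA) - DD - (fB - fA)" by (simp add: eSB algebra_simps)
        hence "cmod (SB - fB) = cmod ((SA - fA) - DD - (fB - fA))" by (rule arg_cong)
        also have "\<dots> \<le> cmod ((SA - fA) - DD) + cmod (fB - fA)" by (rule norm_triangle_ineq4)
        also have "\<dots> \<le> cmod (SA - fA) + cmod DD + cmod (fB - fA)"
          using norm_triangle_ineq4[of "SA - fA" DD] by linarith
        finally have "cmod (SB - fB) \<le> cmod (SA - fA) + cmod DD + cmod (fB - fA)" .
        moreover have "cmod DD \<le> \<rho> \<epsilon> ^ (m'+2)" "cmod (fB - fA) \<le> \<rho> \<epsilon> ^ (m'+2)"
          using elim by (simp_all add: DD_def fA_def fB_def)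
        moreover have "\<rho> \<epsilon> ^ q - cmod (SA - fA) > \<rho> \<epsilon> ^ m'" using elim by (simp add: SA_def fA_def)
        moreover have "\<rho> \<epsilon> ^ (m'+1) + 2 * \<rho> \<epsilon> ^ (m'+2) \<le> \<rho> \<epsilon> ^ m'"
        proof -
          have r: "0 < \<rho> \<epsilon>" "\<rho> \<epsilon> \<le> 1/2" using elim by auto
          have "\<rho> \<epsilon> * \<rho> \<epsilon> \<le> \<rho> \<epsilon> * (1/2)" using r by (intro mult_left_mono) auto
          hence "\<rho> \<epsilon> + 2 * (\<rho> \<epsilon> * \<rho> \<epsilon>) \<le> 1" using r by linarith
          hence "\<rho> \<epsilon> ^ m' * (\<rho> \<epsilon> + 2 * (\<rho> \<epsilon> * \<rho> \<epsilon>)) \<le> \<rho> \<epsilon> ^ m' * 1" using r by (intro mult_left_mono) auto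
          thus ?thesis by (simp add: algebra_simps power_add power2_eq_square)
        qed
        ultimately have "\<rho> \<epsilon> ^ q - cmod (SB - fB) > \<rho> \<epsilon> ^ (m'+1)" by linarith
        thus ?case by (simp add: SB_def fB_def)
      qed
      thus "rt_lt \<rho> (\<lambda>\<epsilon>. cmod (hypersum ni (\<lambda>n \<epsilon>. B n \<epsilon> * (Y \<epsilon> - D \<epsilon>) ^ n) n \<epsilon> - (\<Sum>k. B k \<epsilon> * (Y \<epsilon> - D \<epsilon>) ^ k))) (\<lambda>\<epsilon>. \<rho> \<epsilon> ^ q)"
        unfolding rt_lt_def by blast
    qed
  qed
qed

lemma T: "conds_abc \<rho> ni B Y D \<and> hs_eq \<rho> ni (\<lambda>n \<epsilon>. A n \<epsilon> * (Z \<epsilon> - C \<epsilon>) ^ n) (\<lambda>n \<epsilon>. B n \<epsilon> * (Y \<epsilon> - D \<epsilon>) ^ n)"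
  using T_a T_b T_c T_hs by (simp add: conds_abc_def)


end

context
  fixes \<rho> :: "real \<Rightarrow> real"
  assumes gauge: "rho_gauge \<rho>"
begin

lemma R_close:
  fixes W W' :: "real \<Rightarrow> complex"
  assumes "rho_eq \<rho> W' W"
  shows "\<forall>\<^sub>F \<epsilon> in at_right 0. norm (W' \<epsilon>) + \<rho> \<epsilon> ^ Suc m \<le> norm (W \<epsilon>) + \<rho> \<epsilon> ^ m"
proof -
  have "\<forall>\<^sub>F \<epsilon> in at_right 0. norm (W' \<epsilon> - W \<epsilon>) \<le> \<rho> \<epsilon> ^ Suc m"
    using assms unfolding rho_eq_def rho_negligible_def by blast
  with ev_rho[OF gauge] show ?thesis
  proof eventually_elim
    case (elim \<epsilon>)
    have "norm (W' \<epsilon>) \<le> norm (W \<epsilon>) + norm (W' \<epsilon> - W \<epsilon>)" using norm_triangle_ineq2[of "W' \<epsilon>" "W \<epsilon>"] by simp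
    moreover have "2 * \<rho> \<epsilon> ^ Suc m \<le> \<rho> \<epsilon> ^ m"
    proof -
      have "2 * \<rho> \<epsilon> ^ Suc m = (2 * \<rho> \<epsilon>) * \<rho> \<epsilon> ^ m" by simp
      also have "\<dots> \<le> 1 * \<rho> \<epsilon> ^ m" using elim by (intro mult_right_mono) auto
      finally show ?thesis by simp
    qed
    ultimately show ?case using elim by linarith
  qed
qed

lemma conv_transfer:
  fixes A B :: "nat \<Rightarrow> real \<Rightarrow> complex" and X :: "real \<Rightarrow> real"
  assumes se: "strong_eq \<rho> B A" and Xm: "rho_moderate \<rho> X"
    and R: "\<forall>\<^sub>F \<epsilon> in at_right 0. ereal (X \<epsilon>) < conv_radius (\<lambda>n. A n \<epsilon>)"
  shows "\<forall>\<^sub>F \<epsilon> in at_right 0. ereal (X \<epsilon>) < conv_radius (\<lambda>n. B n \<epsilon>)"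
  using R CR[OF gauge se Xm]
proof eventually_elim
  case (elim \<epsilon>)
  have "ereal (X \<epsilon>) < min (conv_radius (\<lambda>n. A n \<epsilon>)) (conv_radius (\<lambda>n. B n \<epsilon> - A n \<epsilon>))"
    using elim by simp
  also have "\<dots> \<le> conv_radius (\<lambda>n. A n \<epsilon> + (B n \<epsilon> - A n \<epsilon>))" by (rule conv_radius_add_ge)
  finally show ?case by simp
qed

end

theorem theorem2p27:
  fixes \<rho> :: "real \<Rightarrow> real"
    and ni :: "(real \<Rightarrow> nat) \<Rightarrow> (real \<Rightarrow> nat)"
    and a ah :: "nat \<Rightarrow> real \<Rightarrow> complex"
    and z zh c ch :: "real \<Rightarrow> complex"
  assumes "rho_gauge \<rho>"
    and "ni_choice \<rho> ni"
    and "weakly_moderate \<rho> a" and "weakly_moderate \<rho> ah" and "strong_eq \<rho> a ah"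
    and "rho_moderate \<rho> z" and "rho_moderate \<rho> zh" and "rho_eq \<rho> z zh"
    and "rho_moderate \<rho> c" and "rho_moderate \<rho> ch" and "rho_eq \<rho> c ch"
    and "in_conv_set \<rho> ni a z c"
  shows "conds_abc \<rho> ni a z c \<and> conds_abc \<rho> ni ah zh ch
         \<and> hs_eq \<rho> ni (\<lambda>n \<epsilon>. a n \<epsilon> * (z \<epsilon> - c \<epsilon>) ^ n) (\<lambda>n \<epsilon>. ah n \<epsilon> * (zh \<epsilon> - ch \<epsilon>) ^ n)"
proof -
  note gauge = assms(1) and ni = assms(2) and wa = assms(3) and wah = assms(4) and se = assms(5)
    and zm = assms(6) and zhm = assms(7) and zzh = assms(8) and cm = assms(9) and chm = assms(10)
    and cch = assms(11) and ics = assms(12)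
  obtain m where rad: "\<forall>\<^sub>F \<epsilon> in at_right 0. rad a \<epsilon> > ereal (norm (z \<epsilon> - c \<epsilon>) + \<rho> \<epsilon> ^ m)"
    using ics by (auto simp: in_conv_set_def rt_lt_inf_def)
  obtain a' z' c' where wa': "weakly_moderate \<rho> a'" and sea': "strong_eq \<rho> a a'"
    and z'm: "rho_moderate \<rho> z'" and zz': "rho_eq \<rho> z z'" and c'm: "rho_moderate \<rho> c'"
    and cc': "rho_eq \<rho> c c'" and cds: "conds_abc \<rho> ni a' z' c'"
    using ics unfolding in_conv_set_def by blast
  define X where "X = (\<lambda>\<epsilon>. norm (z \<epsilon> - c \<epsilon>) + \<rho> \<epsilon> ^ m)"
  have Xm: "rho_moderate \<rho> X" unfolding X_def
  proof (rule mod_add[OF gauge])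
    show "rho_moderate \<rho> (\<lambda>\<epsilon>. norm (z \<epsilon> - c \<epsilon>))"
      using mod_diff[OF gauge zm cm] by (simp add: rho_moderate_def)
    show "rho_moderate \<rho> (\<lambda>\<epsilon>. \<rho> \<epsilon> ^ m)" unfolding rho_moderate_def
      by (rule exI[of _ 0]) (use ev_rho[OF gauge] in \<open>auto elim!: eventually_mono simp: power_le_one\<close>)
  qed
  have Ra: "\<forall>\<^sub>F \<epsilon> in at_right 0. ereal (X \<epsilon>) < conv_radius (\<lambda>n. a n \<epsilon>)"
    using rad by eventually_elim (simp add: X_def rad_conv)
  have Ra': "\<forall>\<^sub>F \<epsilon> in at_right 0. ereal (X \<epsilon>) < conv_radius (\<lambda>n. a' n \<epsilon>)"
    by (rule conv_transfer[OF gauge strong_eq_sym[OF gauge sea'] Xm Ra])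
  have Rah: "\<forall>\<^sub>F \<epsilon> in at_right 0. ereal (X \<epsilon>) < conv_radius (\<lambda>n. ah n \<epsilon>)"
    by (rule conv_transfer[OF gauge strong_eq_sym[OF gauge se] Xm Ra])
  have e1: "rho_eq \<rho> (\<lambda>\<epsilon>. z' \<epsilon> - c' \<epsilon>) (\<lambda>\<epsilon>. z \<epsilon> - c \<epsilon>)"
  proof -
    have "rho_negligible \<rho> (\<lambda>\<epsilon>. (z' \<epsilon> - z \<epsilon>) - (c' \<epsilon> - c \<epsilon>))"
      using negl_diff[OF gauge] rho_eq_sym[OF gauge zz'] rho_eq_sym[OF gauge cc'] by (simp add: rho_eq_def)
    thus ?thesis by (simp add: rho_eq_def algebra_simps)
  qed
  have e2: "rho_eq \<rho> (\<lambda>\<epsilon>. zh \<epsilon> - ch \<epsilon>) (\<lambda>\<epsilon>. z \<epsilon> - c \<epsilon>)"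
  proof -
    have "rho_negligible \<rho> (\<lambda>\<epsilon>. (zh \<epsilon> - z \<epsilon>) - (ch \<epsilon> - c \<epsilon>))"
      using negl_diff[OF gauge] rho_eq_sym[OF gauge zzh] rho_eq_sym[OF gauge cch] by (simp add: rho_eq_def)
    thus ?thesis by (simp add: rho_eq_def algebra_simps)
  qed
  have radA: "\<forall>\<^sub>F \<epsilon> in at_right 0. ereal (norm (z' \<epsilon> - c' \<epsilon>) + \<rho> \<epsilon> ^ Suc m) \<le> conv_radius (\<lambda>n. a' n \<epsilon>)"
    using R_close[OF gauge e1, of m] Ra'
  proof eventually_elim
    case (elim \<epsilon>)
    hence "ereal (norm (z' \<epsilon> - c' \<epsilon>) + \<rho> \<epsilon> ^ Suc m) \<le> ereal (X \<epsilon>)" by (simp add: X_def)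
    thus ?case by (rule order.trans[OF _ less_imp_le[OF elim(2)]])
  qed
  have radB1: "\<forall>\<^sub>F \<epsilon> in at_right 0. ereal (norm (z \<epsilon> - c \<epsilon>)) < conv_radius (\<lambda>n. a n \<epsilon>)"
    using Ra ev_rho[OF gauge]
  proof eventually_elim
    case (elim \<epsilon>)
    have "ereal (norm (z \<epsilon> - c \<epsilon>)) < ereal (X \<epsilon>)" using elim by (simp add: X_def)
    thus ?case using elim(1) by (rule order.strict_trans)
  qed
  have radB2: "\<forall>\<^sub>F \<epsilon> in at_right 0. ereal (norm (zh \<epsilon> - ch \<epsilon>)) < conv_radius (\<lambda>n. ah n \<epsilon>)"
    using R_close[OF gauge e2, of m] Rah ev_rho[OF gauge]
  proof eventually_elim
    case (elim \<epsilon>)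
    have "0 < \<rho> \<epsilon> ^ Suc m" using elim(3) by simp
    hence "ereal (norm (zh \<epsilon> - ch \<epsilon>)) < ereal (X \<epsilon>)"
      using elim(1) by (simp add: X_def del: power_Suc)
    thus ?case using elim(2) by (rule order.strict_trans)
  qed
  have T1: "conds_abc \<rho> ni a z c \<and> hs_eq \<rho> ni (\<lambda>n \<epsilon>. a' n \<epsilon> * (z' \<epsilon> - c' \<epsilon>) ^ n) (\<lambda>n \<epsilon>. a n \<epsilon> * (z \<epsilon> - c \<epsilon>) ^ n)"
    by (rule T[OF gauge ni wa' strong_eq_sym[OF gauge sea'] z'm c'm zm cm zz' cc' cds radA radB1])
  have zhz': "rho_eq \<rho> zh z'" by (rule rho_eq_trans[OF gauge rho_eq_sym[OF gauge zzh] zz'])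
  have chc': "rho_eq \<rho> ch c'" by (rule rho_eq_trans[OF gauge rho_eq_sym[OF gauge cch] cc'])
  have sea'h: "strong_eq \<rho> a' ah" by (rule strong_eq_trans[OF gauge strong_eq_sym[OF gauge sea'] se])
  have T2: "conds_abc \<rho> ni ah zh ch \<and> hs_eq \<rho> ni (\<lambda>n \<epsilon>. a' n \<epsilon> * (z' \<epsilon> - c' \<epsilon>) ^ n) (\<lambda>n \<epsilon>. ah n \<epsilon> * (zh \<epsilon> - ch \<epsilon>) ^ n)"
    by (rule T[OF gauge ni wa' sea'h z'm c'm zhm chm zhz' chc' cds radA radB2])
  have hs: "hs_eq \<rho> ni (\<lambda>n \<epsilon>. a n \<epsilon> * (z \<epsilon> - c \<epsilon>) ^ n) (\<lambda>n \<epsilon>. ah n \<epsilon> * (zh \<epsilon> - ch \<epsilon>) ^ n)"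
    unfolding hs_eq_def
  proof (intro allI impI)
    fix N M assume N: "hypernat \<rho> N" and M: "hypernat \<rho> M"
    have n1: "rho_negligible \<rho> (\<lambda>\<epsilon>. \<Sum>n\<in>{ni N \<epsilon>..ni M \<epsilon>}. a' n \<epsilon> * (z' \<epsilon> - c' \<epsilon>) ^ n - a n \<epsilon> * (z \<epsilon> - c \<epsilon>) ^ n)"
      using T1 N M by (simp add: hs_eq_def)
    have n2: "rho_negligible \<rho> (\<lambda>\<epsilon>. \<Sum>n\<in>{ni N \<epsilon>..ni M \<epsilon>}. a' n \<epsilon> * (z' \<epsilon> - c' \<epsilon>) ^ n - ah n \<epsilon> * (zh \<epsilon> - ch \<epsilon>) ^ n)"
      using T2 N M by (simp add: hs_eq_def)
    have "rho_negligible \<rho> (\<lambda>\<epsilon>. (\<Sum>n\<in>{ni N \<epsilon>..ni M \<epsilon>}. a' n \<epsilon> * (z' \<epsilon> - c' \<epsilon>) ^ n - ah n \<epsilon> * (zh \<epsilon> - ch \<epsilon>) ^ n)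
        - (\<Sum>n\<in>{ni N \<epsilon>..ni M \<epsilon>}. a' n \<epsilon> * (z' \<epsilon> - c' \<epsilon>) ^ n - a n \<epsilon> * (z \<epsilon> - c \<epsilon>) ^ n))"
      by (rule negl_diff[OF gauge n2 n1])
    thus "rho_negligible \<rho> (\<lambda>\<epsilon>. \<Sum>n\<in>{ni N \<epsilon>..ni M \<epsilon>}. a n \<epsilon> * (z \<epsilon> - c \<epsilon>) ^ n - ah n \<epsilon> * (zh \<epsilon> - ch \<epsilon>) ^ n)"
      by (simp add: sum_subtractf)
  qed
  show ?thesis using T1 T2 hs by blast
qed

end
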